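(* Let $(B_k,\delta_k)_{k\ge1}$ be any sequence with $B_k\ge 1$, $\delta_k\in(0,1)$ and $B_k+\delta_k^{-1}\to\infty$, and write $L_k=\log(\delta_k^{-1})$ and $d_k=d_{B_k;\delta_k}(e^{x})$. Then: \begin{enumerate} \item If $B_k/L_k\to 0$, then $d_k = \dfrac{L_k}{\log(B_k^{-1}L_k)}\,(1+o(1))$. \item If $B_k = 2rL_k$ for a fixed $r>0$, then $d_k = (\mu r+o(1))L_k$, where $\mu=\mu(r)>0$ is the unique positive solution of $G(\mu)=-1-r^{-1}$. \item If $B_k/L_k\to\infty$, then $d_k=\dfrac{z_*B_k}{2}(1+o(1))$, where $z_*\approx 2.2334$ is the unique positive solution of $G(z_* )=-1$. \end{enumerate}
   Context: For real $B\ge1$, $\delta\in(0,1)$ and a function $f:[0,B]\to\mathbb{R}$, $d_{B;\delta}(f)$ denotes the minimum degree of a non-constant real polynomial $p$ satisfying $\sup_{x\in[0,B]}|p(x)-f(x)|<\delta$. Define $G:\mathbb{R}_{\ge0}\to\mathbb{R}$ by $G(x)=\sqrt{x^2+1}+x\log\big(\sqrt{x^2+1}-x\big)$ (natural logarithm); $G(0)=1$, $G$ is strictly decreasing on $(0,\infty)$ and tends to $-\infty$, so the solutions referred to are unique. All $o(1)$ terms are as $k\to\infty$. *)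

theory Defs
  imports Complex_Main "HOL-Computational_Algebra.Polynomial"
begin

definition G :: "real \<Rightarrow> real" where
  "G x = sqrt (x\<^sup>2 + 1) + x * ln (sqrt (x\<^sup>2 + 1) - x)"

definition approx_degree :: "real \<Rightarrow> real \<Rightarrow> (real \<Rightarrow> real) \<Rightarrow> nat" where
  "approx_degree B \<delta> f =
     (LEAST n. \<exists>p :: real poly. degree p = n \<and> 0 < degree p \<and>
        (SUP x\<in>{0..B}. \<bar>poly p x - f x\<bar>) < \<delta>)"

end

theory Submission
  imports Defs "HOL-Real_Asymp.Real_Asymp"
begin



fun cheb :: "nat \<Rightarrow> real poly" where
  "cheb 0 = 1"
| "cheb (Suc 0) = [:0, 1:]"
| "cheb (Suc (Suc n)) = [:0, 2:] * cheb (Suc n) - cheb n"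

lemma cheb_cos: "poly (cheb n) (cos x) = cos (real n * x)"
proof (induction n rule: cheb.induct)
  case (3 n)
  have "cos (real (Suc (Suc n)) * x) = 2 * cos x * cos (real (Suc n) * x) - cos (real n * x)"
  proof -
    have e1: "real (Suc (Suc n)) * x = real (Suc n) * x + x" by (simp add: algebra_simps)
    have e2: "real n * x = real (Suc n) * x - x" by (simp add: algebra_simps)
    show ?thesis unfolding e1 e2 cos_add cos_diff by (simp add: algebra_simps)
  qed
  then show ?case using 3 by simp
qed auto

lemma degree_cheb: "degree (cheb n) \<le> n"
proof (induction n rule: cheb.induct)
  case (3 n)
  have "degree ([:0, 2:] * cheb (Suc n)) \<le> Suc (Suc n)"
    using degree_mult_le[of "[:0,2:]" "cheb (Suc n)"] 3 by simp
  moreover have "degree (cheb n) \<le> Suc (Suc n)" using 3 by simp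
  ultimately show ?case by (simp add: degree_diff_le)
qed auto

lemma cheb_bound: assumes "\<bar>t\<bar> \<le> 1" shows "\<bar>poly (cheb n) t\<bar> \<le> 1"
proof -
  have "t = cos (arccos t)" using assms by simp
  then show ?thesis by (metis cheb_cos abs_cos_le_one)
qed

lemma cos_power_expand:
  "cos x ^ m = (\<Sum>i\<le>m. real (m choose i) * cos ((2 * real i - real m) * x)) / 2 ^ m"
proof -
  have c: "complex_of_real (cos x) = (cis x + cis (-x)) / 2"
    by (simp add: complex_eq_iff)
  have "complex_of_real (cos x ^ m) = (cis x + cis (-x)) ^ m / 2 ^ m"
    by (simp add: c power_divide)
  also have "(cis x + cis (-x)) ^ m = (\<Sum>i\<le>m. of_nat (m choose i) * cis x ^ i * cis (-x) ^ (m - i))"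
    by (simp add: binomial_ring)
  also have "\<dots> = (\<Sum>i\<le>m. of_nat (m choose i) * cis ((2 * real i - real m) * x))"
  proof (rule sum.cong)
    fix i assume "i \<in> {..m}"
    then have "real (m - i) = real m - real i" by simp
    then have "cis x ^ i * cis (-x) ^ (m - i) = cis ((2 * real i - real m) * x)"
      by (simp add: DeMoivre cis_mult algebra_simps)
    then show "of_nat (m choose i) * cis x ^ i * cis (-x) ^ (m - i) = of_nat (m choose i) * cis ((2 * real i - real m) * x)"
      by (simp add: mult.assoc)
  qed simp
  finally have "complex_of_real (cos x ^ m) = (\<Sum>i\<le>m. of_nat (m choose i) * cis ((2 * real i - real m) * x)) / 2 ^ m" .
  then have "Re (complex_of_real (cos x ^ m)) = Re ((\<Sum>i\<le>m. of_nat (m choose i) * cis ((2 * real i - real m) * x)) / 2 ^ m)"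
    by simp
  also have "\<dots> = (\<Sum>i\<le>m. real (m choose i) * cos ((2 * real i - real m) * x)) / 2 ^ m"
    by (simp add: Re_sum Re_divide power2_eq_square)
  finally show ?thesis by simp
qed


lemma cos_abs_mult: "cos (\<bar>u\<bar> * x) = cos (u * x)" for u x :: real
  by (cases "u \<ge> 0") (auto simp: abs_if)

lemma power_cheb:
  assumes "\<bar>t\<bar> \<le> 1"
  shows "t ^ m = (\<Sum>i\<le>m. real (m choose i) * poly (cheb (nat \<bar>2 * int i - int m\<bar>)) t) / 2 ^ m"
proof -
  define x where "x = arccos t"
  have t: "t = cos x" using assms by (simp add: x_def)
  have "poly (cheb (nat \<bar>2 * int i - int m\<bar>)) (cos x) = cos ((2 * real i - real m) * x)" for i
  proof -
    have "real (nat \<bar>2 * int i - int m\<bar>) = \<bar>2 * real i - real m\<bar>" by linarith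
    then show ?thesis by (simp add: cheb_cos cos_abs_mult)
  qed
  then show ?thesis unfolding t by (simp add: cos_power_expand)
qed

lemma pow_inv_split:
  fixes \<rho> :: real assumes "\<rho> > 0" "j \<le> i"
  shows "\<rho> ^ i * (1 / \<rho>) ^ j = \<rho> ^ (i - j)"
proof -
  have "\<rho> ^ i = \<rho> ^ (i - j) * \<rho> ^ j" using assms(2) by (simp add: power_add[symmetric])
  then show ?thesis using assms(1) by (simp add: power_one_over field_simps)
qed

lemma nat_abs_diff: "nat \<bar>2 * int i - int m\<bar> = (if m \<le> 2*i then 2*i - m else m - 2*i)"
  by (simp add: nat_diff_distrib' of_nat_diff abs_if split: if_splits; linarith)

lemma indicator_pow_bound:
  fixes \<rho> :: real
  assumes "\<rho> \<ge> 1" "i \<le> m" "\<not> nat \<bar>2 * int i - int m\<bar> \<le> n"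
  shows "1 \<le> (\<rho> ^ i * (1/\<rho>) ^ (m - i) + \<rho> ^ (m - i) * (1/\<rho>) ^ i) / \<rho> ^ (n + 1)"
proof -
  have rp: "\<rho> ^ (n+1) > 0" using assms(1) by simp
  have nn: "0 \<le> \<rho> ^ i * (1/\<rho>) ^ (m - i)" "0 \<le> \<rho> ^ (m - i) * (1/\<rho>) ^ i" using assms(1) by auto
  have "\<rho> ^ (n+1) \<le> \<rho> ^ i * (1/\<rho>) ^ (m - i) + \<rho> ^ (m - i) * (1/\<rho>) ^ i"
  proof (cases "2 * i \<ge> m")
    case True
    then have "n + 1 \<le> i - (m - i)" using assms(2) assms(3)[unfolded nat_abs_diff] True by (simp split: if_splits; linarith)
    then have "\<rho> ^ (n+1) \<le> \<rho> ^ (i - (m - i))" using assms(1) by (intro power_increasing)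
    also have "\<dots> = \<rho> ^ i * (1/\<rho>) ^ (m - i)" using True assms(1) by (subst pow_inv_split) auto
    finally show ?thesis using nn by linarith
  next
    case False
    then have "n + 1 \<le> (m - i) - i" using assms(2) assms(3)[unfolded nat_abs_diff] False by (simp split: if_splits; linarith)
    then have "\<rho> ^ (n+1) \<le> \<rho> ^ ((m - i) - i)" using assms(1) by (intro power_increasing)
    also have "\<dots> = \<rho> ^ (m - i) * (1/\<rho>) ^ i" using False assms(1) by (subst pow_inv_split) auto
    finally show ?thesis using nn by linarith
  qed
  then show ?thesis using rp by simp
qed

lemma exp_partial_le:
  fixes x :: real assumes "x \<ge> 0"
  shows "(\<Sum>m<M. x ^ m / fact m) \<le> exp x"
proof -
  obtain t where t: "\<bar>t\<bar> \<le> \<bar>x\<bar>" "exp x = (\<Sum>m<M. x ^ m / fact m) + exp t / fact M * x ^ M"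
    using Maclaurin_exp_le by blast
  have "exp t / fact M * x ^ M \<ge> 0" using assms by simp
  then show ?thesis using t(2) by linarith
qed


lemma binom_sum_X:
  fixes \<rho> :: real
  shows "(\<Sum>i\<le>m. real (m choose i) * (\<rho> ^ i * (1/\<rho>) ^ (m - i))) = (\<rho> + 1/\<rho>) ^ m"
  by (simp add: binomial_ring mult.assoc)

lemma binom_sum_Y:
  fixes \<rho> :: real
  shows "(\<Sum>i\<le>m. real (m choose i) * (\<rho> ^ (m - i) * (1/\<rho>) ^ i)) = (\<rho> + 1/\<rho>) ^ m"
  using binomial_ring[of "1/\<rho>" \<rho> m] by (simp add: mult.assoc mult.commute[of "\<rho> ^ _"] add.commute)

lemma exists_M_small:
  fixes a \<epsilon> :: real assumes "\<epsilon> > 0"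
  shows "\<exists>M. exp a * (\<bar>a\<bar> ^ M / fact M) \<le> \<epsilon>"
proof -
  have "(\<lambda>n. inverse (fact n) * \<bar>a\<bar> ^ n) \<longlonglongrightarrow> 0"
    by (rule summable_LIMSEQ_zero[OF summable_exp])
  then have "eventually (\<lambda>n. inverse (fact n) * \<bar>a\<bar> ^ n < \<epsilon> / exp a) sequentially"
    using assms by (intro order_tendstoD) auto
  then obtain M where "inverse (fact M) * \<bar>a\<bar> ^ M < \<epsilon> / exp a"
    by (meson eventually_sequentially order_refl)
  then have "exp a * (\<bar>a\<bar> ^ M / fact M) < \<epsilon>"
    by (simp add: field_simps)
  then show ?thesis by (intro exI[of _ M]) simp
qed

lemma cheb_approx_upper:
  fixes a \<rho> \<epsilon> :: real and n :: nat
  assumes a: "a > 0" and \<rho>: "\<rho> \<ge> 1" and \<epsilon>: "\<epsilon> > 0"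
  shows "\<exists>q. degree q \<le> n \<and> (\<forall>t. \<bar>t\<bar> \<le> 1 \<longrightarrow>
            \<bar>exp (a * t) - poly q t\<bar> \<le> 2 * exp (a * (\<rho> + 1/\<rho>) / 2) / \<rho> ^ (n+1) + \<epsilon>)"
proof -
  obtain M where M: "exp a * (\<bar>a\<bar> ^ M / fact M) \<le> \<epsilon>" using exists_M_small[OF \<epsilon>] by blast
  define w where "w m i = (a/2)^m / fact m * real (m choose i)" for m i :: nat
  define P where "P m i \<longleftrightarrow> nat \<bar>2 * int i - int m\<bar> \<le> n" for m i :: nat
  define C where "C m i = cheb (nat \<bar>2 * int i - int m\<bar>)" for m i :: nat
  define q where "q = (\<Sum>m<M. \<Sum>i\<le>m. if P m i then smult (w m i) (C m i) else 0)"
  have wnn: "w m i \<ge> 0" for m i using a by (simp add: w_def)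
  have dg: "degree (if P m i then smult (w m i) (C m i) else 0) \<le> n" for m i
  proof (cases "P m i")
    case True
    then show ?thesis using degree_cheb[of "nat \<bar>2 * int i - int m\<bar>"]
      by (simp add: C_def P_def)
  qed simp
  have "degree q \<le> n"
    unfolding q_def by (intro degree_sum_le) (use dg in auto)
  moreover have "\<bar>exp (a * t) - poly q t\<bar> \<le> 2 * exp (a * (\<rho> + 1/\<rho>) / 2) / \<rho> ^ (n+1) + \<epsilon>"
    if t: "\<bar>t\<bar> \<le> 1" for t
  proof -
    define T where "T m i = poly (C m i) t" for m i
    have Tb: "\<bar>T m i\<bar> \<le> 1" for m i unfolding T_def C_def using cheb_bound[OF t] .
    have pq: "poly q t = (\<Sum>m<M. \<Sum>i\<le>m. if P m i then w m i * T m i else 0)"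
      unfolding q_def T_def by (auto simp: poly_sum intro!: sum.cong)
    obtain s where s: "\<bar>s\<bar> \<le> \<bar>a * t\<bar>"
      "exp (a * t) = (\<Sum>m<M. (a * t) ^ m / fact m) + exp s / fact M * (a * t) ^ M"
      using Maclaurin_exp_le by blast
    define r where "r = exp s / fact M * (a * t) ^ M"
    have "\<bar>a * t\<bar> \<le> \<bar>a\<bar>" using t a by (simp add: abs_mult mult_left_le)
    then have e1: "exp s \<le> exp a" using s(1) a by simp
    have e2: "\<bar>a * t\<bar> ^ M \<le> \<bar>a\<bar> ^ M" using \<open>\<bar>a * t\<bar> \<le> \<bar>a\<bar>\<close> by (intro power_mono) auto
    have "\<bar>r\<bar> = exp s * (\<bar>a * t\<bar> ^ M / fact M)" unfolding r_def by (simp add: abs_mult power_abs)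
    also have "\<dots> \<le> exp a * (\<bar>a\<bar> ^ M / fact M)"
      using e1 e2 by (intro mult_mono divide_right_mono) auto
    finally have "\<bar>r\<bar> \<le> exp a * (\<bar>a\<bar> ^ M / fact M)" .
    then have rb: "\<bar>r\<bar> \<le> \<epsilon>" using M by linarith
    have tay: "(a * t) ^ m / fact m = (\<Sum>i\<le>m. w m i * T m i)" for m
    proof -
      have "(a * t) ^ m / fact m = (a/2)^m / fact m * (\<Sum>i\<le>m. real (m choose i) * T m i)"
        unfolding T_def C_def using power_cheb[OF t, of m]
        by (simp add: power_mult_distrib power_divide field_simps)
      then show ?thesis by (simp add: w_def sum_distrib_left mult.assoc)
    qed
    have "exp (a * t) - poly q t = (\<Sum>m<M. \<Sum>i\<le>m. if P m i then 0 else w m i * T m i) + r"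
    proof -
      have "exp (a * t) = (\<Sum>m<M. \<Sum>i\<le>m. w m i * T m i) + r"
        using s(2) tay by (simp add: r_def)
      moreover have "(\<Sum>m<M. \<Sum>i\<le>m. w m i * T m i) =
          (\<Sum>m<M. \<Sum>i\<le>m. if P m i then w m i * T m i else 0) + (\<Sum>m<M. \<Sum>i\<le>m. if P m i then 0 else w m i * T m i)"
        by (simp add: sum.distrib[symmetric] if_distrib cong: if_cong)
      ultimately show ?thesis using pq by simp
    qed
    then have "\<bar>exp (a * t) - poly q t\<bar> \<le> \<bar>\<Sum>m<M. \<Sum>i\<le>m. if P m i then 0 else w m i * T m i\<bar> + \<epsilon>"
      using rb by linarith
    also have "\<bar>\<Sum>m<M. \<Sum>i\<le>m. if P m i then 0 else w m i * T m i\<bar> \<le>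
        (\<Sum>m<M. \<Sum>i\<le>m. w m i * ((\<rho> ^ i * (1/\<rho>) ^ (m - i) + \<rho> ^ (m - i) * (1/\<rho>) ^ i) / \<rho> ^ (n + 1)))"
    proof -
      have "\<bar>if P m i then 0 else w m i * T m i\<bar> \<le>
            w m i * ((\<rho> ^ i * (1/\<rho>) ^ (m - i) + \<rho> ^ (m - i) * (1/\<rho>) ^ i) / \<rho> ^ (n + 1))"
        if "i \<le> m" for m i
      proof (cases "P m i")
        case True
        then show ?thesis using wnn[of m i] \<rho> by simp
      next
        case False
        have "\<bar>w m i * T m i\<bar> \<le> w m i" using wnn[of m i] Tb[of m i]
          by (simp add: abs_mult mult_left_le)
        also have "\<dots> \<le> w m i * ((\<rho> ^ i * (1/\<rho>) ^ (m - i) + \<rho> ^ (m - i) * (1/\<rho>) ^ i) / \<rho> ^ (n + 1))"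
          using mult_left_mono[OF indicator_pow_bound[OF \<rho> that False[unfolded P_def]] wnn[of m i]]
          by simp
        finally show ?thesis using False by simp
      qed
      then show ?thesis
        by (intro order.trans[OF sum_abs] sum_mono order.trans[OF sum_abs] sum_mono) auto
    qed
    also have "\<dots> = (\<Sum>m<M. 2 / \<rho> ^ (n+1) * ((a * (\<rho> + 1/\<rho>) / 2) ^ m / fact m))"
    proof (rule sum.cong[OF refl])
      fix m
      have "(\<Sum>i\<le>m. w m i * ((\<rho> ^ i * (1/\<rho>) ^ (m - i) + \<rho> ^ (m - i) * (1/\<rho>) ^ i) / \<rho> ^ (n + 1)))
          = (a/2)^m / fact m / \<rho> ^ (n+1) * ((\<Sum>i\<le>m. real (m choose i) * (\<rho> ^ i * (1/\<rho>) ^ (m - i)))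
              + (\<Sum>i\<le>m. real (m choose i) * (\<rho> ^ (m - i) * (1/\<rho>) ^ i)))"
        unfolding w_def sum_distrib_left sum.distrib[symmetric] by (rule sum.cong) (simp_all add: field_simps)
      also have "\<dots> = 2 / \<rho> ^ (n+1) * ((a * (\<rho> + 1/\<rho>) / 2) ^ m / fact m)"
        unfolding binom_sum_X binom_sum_Y by (simp add: power_mult_distrib[symmetric] power_divide field_simps)
      finally show "(\<Sum>i\<le>m. w m i * ((\<rho> ^ i * (1/\<rho>) ^ (m - i) + \<rho> ^ (m - i) * (1/\<rho>) ^ i) / \<rho> ^ (n + 1)))
          = 2 / \<rho> ^ (n+1) * ((a * (\<rho> + 1/\<rho>) / 2) ^ m / fact m)" .
    qed
    also have "\<dots> = 2 / \<rho> ^ (n+1) * (\<Sum>m<M. (a * (\<rho> + 1/\<rho>) / 2) ^ m / fact m)"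
      by (simp add: sum_distrib_left)
    also have "\<dots> \<le> 2 / \<rho> ^ (n+1) * exp (a * (\<rho> + 1/\<rho>) / 2)"
      using \<rho> a by (intro mult_left_mono exp_partial_le) auto
    finally show ?thesis by simp
  qed
  ultimately show ?thesis by blast
qed


lemma root_sum_cis:
  fixes N :: nat and x :: int assumes N: "N > 0"
  shows "(\<Sum>j<N. cis (2 * pi * real j * real_of_int x / real N)) = (if int N dvd x then of_nat N else 0)"
proof -
  define \<omega> where "\<omega> = cis (2 * pi * real_of_int x / real N)"
  have pw: "cis (2 * pi * real j * real_of_int x / real N) = \<omega> ^ j" for j
    unfolding \<omega>_def DeMoivre by (simp add: algebra_simps)
  show ?thesis
  proof (cases "int N dvd x")
    case True
    then obtain c where c: "x = int N * c" by blast
    have "2 * pi * real_of_int x / real N = 2 * pi * real_of_int c" unfolding c using N by simp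
    then have "\<omega> = cis (2 * pi * real_of_int c)" unfolding \<omega>_def by simp
    also have "\<dots> = 1" by (rule cis_multiple_2pi) simp
    finally show ?thesis using True by (simp add: pw)
  next
    case False
    have w1: "\<omega> \<noteq> 1"
    proof
      assume "\<omega> = 1"
      then have "cos (2 * pi * real_of_int x / real N) = 1" unfolding \<omega>_def
        by (metis cis.sel(1) one_complex.sel(1))
      then obtain n :: int where "2 * pi * real_of_int x / real N = real_of_int n * 2 * pi"
        using cos_one_2pi_int by blast
      then have "real_of_int x = real_of_int n * real N" using N by (simp add: field_simps)
      then have "x = n * int N" by (metis of_int_eq_iff of_int_mult of_int_of_nat_eq)
      then show False using False by simp
    qed
    have wN: "\<omega> ^ N = 1" unfolding \<omega>_def DeMoivre using N
      by (simp add: cis_multiple_2pi)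
    have "(\<Sum>j<N. \<omega> ^ j) = 0" using geometric_sum[OF w1, of N] wN by simp
    then show ?thesis using False by (simp add: pw)
  qed
qed

lemma root_sum_cos:
  fixes N :: nat and x :: int assumes N: "N > 0"
  shows "(\<Sum>j<N. cos (2 * pi * real j * real_of_int x / real N)) = (if int N dvd x then real N else 0)"
proof -
  have "Re (\<Sum>j<N. cis (2 * pi * real j * real_of_int x / real N)) = (if int N dvd x then real N else 0)"
    unfolding root_sum_cis[OF N] by simp
  then show ?thesis by (simp add: Re_sum)
qed

definition Sc :: "nat \<Rightarrow> nat \<Rightarrow> nat \<Rightarrow> real" where
  "Sc N k m = (\<Sum>j<N. cos (2 * pi * real j / real N) ^ m * cos (real k * (2 * pi * real j / real N)))"

lemma Sc_formula:
  assumes N: "N > 0"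
  shows "Sc N k m = (\<Sum>i\<le>m. real (m choose i) *
     (((if int N dvd (2 * int i - int m - int k) then real N else 0)
      + (if int N dvd (2 * int i - int m + int k) then real N else 0)) / 2)) / 2 ^ m"
proof -
  define th where "th j = 2 * pi * real j / real N" for j :: nat
  have "Sc N k m = (\<Sum>j<N. (\<Sum>i\<le>m. real (m choose i) * cos ((2 * real i - real m) * th j)) / 2 ^ m * cos (real k * th j))"
    unfolding Sc_def th_def[symmetric] cos_power_expand ..
  also have "\<dots> = (\<Sum>j<N. \<Sum>i\<le>m. real (m choose i) *
      ((cos (2 * pi * real j * real_of_int (2 * int i - int m - int k) / real N)
      + cos (2 * pi * real j * real_of_int (2 * int i - int m + int k) / real N)) / 2)) / 2 ^ m"
  proof -
    have cc0: "cos ((2 * real i - real m) * th j) * cos (real k * th j) =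
       (cos (2 * pi * real j * real_of_int (2 * int i - int m - int k) / real N)
      + cos (2 * pi * real j * real_of_int (2 * int i - int m + int k) / real N)) / 2" for i j
      unfolding cos_times_cos th_def by (simp add: algebra_simps add_divide_distrib diff_divide_distrib)
    have cc: "real (m choose i) * cos ((2 * real i - real m) * th j) / 2 ^ m * cos (real k * th j) =
       real (m choose i) * ((cos (2 * pi * real j * real_of_int (2 * int i - int m - int k) / real N)
      + cos (2 * pi * real j * real_of_int (2 * int i - int m + int k) / real N)) / 2) / 2 ^ m" for i j
      by (subst cc0[symmetric]) (simp add: field_simps)
    have "(\<Sum>i\<le>m. real (m choose i) * cos ((2 * real i - real m) * th j)) / 2 ^ m * cos (real k * th j)
      = (\<Sum>i\<le>m. real (m choose i) *
      ((cos (2 * pi * real j * real_of_int (2 * int i - int m - int k) / real N)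
      + cos (2 * pi * real j * real_of_int (2 * int i - int m + int k) / real N)) / 2)) / 2 ^ m" for j
      unfolding sum_distrib_right sum_divide_distrib by (intro sum.cong refl) (rule cc)
    then show ?thesis by (simp add: sum_divide_distrib)
  qed
  also have "\<dots> = (\<Sum>i\<le>m. real (m choose i) *
      (((\<Sum>j<N. cos (2 * pi * real j * real_of_int (2 * int i - int m - int k) / real N))
      + (\<Sum>j<N. cos (2 * pi * real j * real_of_int (2 * int i - int m + int k) / real N))) / 2)) / 2 ^ m"
    by (subst sum.swap, intro arg_cong[where f="\<lambda>x. x / 2 ^ m"] sum.cong refl) (simp add: sum_distrib_left[symmetric] sum_divide_distrib[symmetric] sum.distrib)
  also have "\<dots> = (\<Sum>i\<le>m. real (m choose i) *
     (((if int N dvd (2 * int i - int m - int k) then real N else 0)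
      + (if int N dvd (2 * int i - int m + int k) then real N else 0)) / 2)) / 2 ^ m"
    unfolding root_sum_cos[OF N] ..
  finally show ?thesis .
qed


lemma not_dvd_small:
  fixes N :: nat and x :: int
  assumes "x \<noteq> 0" "\<bar>x\<bar> < int N" shows "\<not> int N dvd x"
proof
  assume d: "int N dvd x"
  then have "int N dvd \<bar>x\<bar>" by simp
  then have "int N \<le> \<bar>x\<bar>" using assms(1) by (intro zdvd_imp_le) auto
  then show False using assms(2) by simp
qed

lemma Sc_orth:
  assumes k: "k \<ge> 1" and m: "m < k"
  shows "Sc (2 * k) k m = 0"
proof -
  have "(if int (2*k) dvd (2 * int i - int m - int k) then real (2*k) else 0) = 0"
       "(if int (2*k) dvd (2 * int i - int m + int k) then real (2*k) else 0) = 0"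
    if "i \<le> m" for i
  proof -
    have "\<not> int (2*k) dvd (2 * int i - int m - int k)"
      by (rule not_dvd_small; use that m in arith)
    moreover have "\<not> int (2*k) dvd (2 * int i - int m + int k)"
      by (rule not_dvd_small; use that m in arith)
    ultimately show "(if int (2*k) dvd (2 * int i - int m - int k) then real (2*k) else 0) = 0"
       "(if int (2*k) dvd (2 * int i - int m + int k) then real (2*k) else 0) = 0" by auto
  qed
  then show ?thesis using k by (subst Sc_formula) auto
qed

lemma Sc_nonneg: assumes "N > 0" shows "Sc N k m \<ge> 0"
  using assms by (subst Sc_formula) (auto intro!: sum_nonneg divide_nonneg_nonneg)

lemma Sc_diag:
  assumes N: "N > 0"
  shows "Sc N k (k + 2*j) \<ge> real ((k + 2*j) choose (k + j)) * (real N / 2) / 2 ^ (k + 2*j)"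
proof -
  define m where "m = k + 2*j"
  define f where "f i = real (m choose i) *
     (((if int N dvd (2 * int i - int m - int k) then real N else 0)
      + (if int N dvd (2 * int i - int m + int k) then real N else 0)) / 2)" for i
  have "f (k + j) \<le> sum f {..m}"
    by (rule member_le_sum) (auto simp: f_def m_def)
  moreover have "f (k + j) \<ge> real (m choose (k + j)) * (real N / 2)"
    unfolding f_def m_def by (auto simp: field_simps)
  ultimately have "sum f {..m} / 2 ^ m \<ge> real (m choose (k + j)) * (real N / 2) / 2 ^ m"
    by (intro divide_right_mono) auto
  then show ?thesis using Sc_formula[OF N, of k m] by (simp add: f_def m_def)
qed

lemma mult_le_abs1: fixes x y :: real assumes "\<bar>y\<bar> \<le> 1" shows "x * y \<le> \<bar>x\<bar>"
proof -
  have "x * y \<le> \<bar>x\<bar> * \<bar>y\<bar>" by (metis abs_ge_self abs_mult)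
  also have "\<dots> \<le> \<bar>x\<bar>" using assms by (simp add: mult_left_le)
  finally show ?thesis .
qed

lemma cheb_lower:
  fixes a :: real and k j :: nat and q :: "real poly"
  assumes a: "a > 0" and k: "k \<ge> 1" and dq: "degree q < k"
  shows "\<exists>t. \<bar>t\<bar> \<le> 1 \<and> (a/2)^(k+2*j) / (fact j * fact (k+j)) / 2 \<le> \<bar>exp (a*t) - poly q t\<bar>"
proof (rule ccontr)
  assume H: "\<not> ?thesis"
  define N where "N = 2 * k"
  have N: "N > 0" using k by (simp add: N_def)
  define c where "c i = cos (2 * pi * real i / real N)" for i :: nat
  define ck where "ck i = cos (real k * (2 * pi * real i / real N))" for i :: nat
  define T where "T = (a/2)^(k+2*j) / (fact j * fact (k+j))"
  have Sp: "(\<Sum>i<N. poly q (c i) * ck i) = 0"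
  proof -
    have "(\<Sum>i<N. poly q (c i) * ck i) = (\<Sum>i<N. \<Sum>m\<le>degree q. coeff q m * (c i ^ m * ck i))"
      by (simp add: poly_altdef sum_distrib_right mult.assoc)
    also have "\<dots> = (\<Sum>m\<le>degree q. coeff q m * Sc N k m)"
      by (subst sum.swap) (simp add: Sc_def c_def ck_def sum_distrib_left)
    also have "\<dots> = 0" using Sc_orth[OF k] dq by (simp add: N_def)
    finally show ?thesis .
  qed
  define V where "V = (\<Sum>i<N. exp (a * c i) * ck i)"
  have Se: "(\<lambda>m. a^m / fact m * Sc N k m) sums V"
  proof -
    have "(\<lambda>m. (a * c i)^m / fact m * ck i) sums (exp (a * c i) * ck i)" for i
      using sums_mult2[OF exp_converges[of "a * c i"], of "ck i"] by (simp add: divide_inverse_commute)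
    then have "(\<lambda>m. \<Sum>i<N. (a * c i)^m / fact m * ck i) sums V"
      unfolding V_def by (rule sums_sum)
    moreover have "(\<Sum>i<N. (a * c i)^m / fact m * ck i) = a^m / fact m * Sc N k m" for m
      by (simp add: Sc_def c_def ck_def sum_distrib_left power_mult_distrib field_simps)
    ultimately show ?thesis by simp
  qed
  have "a^(k+2*j) / fact (k+2*j) * Sc N k (k+2*j) \<le> V"
  proof -
    have "sum (\<lambda>m. a^m / fact m * Sc N k m) {k+2*j} \<le> suminf (\<lambda>m. a^m / fact m * Sc N k m)"
      by (rule sum_le_suminf) (use Se a Sc_nonneg[OF N] in \<open>auto simp: sums_iff\<close>)
    then show ?thesis using Se by (simp add: sums_iff)
  qed
  moreover have "a^(k+2*j) / fact (k+2*j) * Sc N k (k+2*j) \<ge> a^(k+2*j) / fact (k+2*j) *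
      (real ((k + 2*j) choose (k + j)) * (real N / 2) / 2 ^ (k + 2*j))"
    using Sc_diag[OF N, of k j] a by (intro mult_left_mono) auto
  moreover have "a^(k+2*j) / fact (k+2*j) *
      (real ((k + 2*j) choose (k + j)) * (real N / 2) / 2 ^ (k + 2*j)) = T * (real N / 2)"
  proof -
    have "real ((k + 2*j) choose (k + j)) = fact (k+2*j) / (fact (k+j) * fact j)"
      by (subst binomial_fact) auto
    then show ?thesis unfolding T_def by (simp add: power_divide field_simps)
  qed
  ultimately have VT: "T * (real N / 2) \<le> V" by linarith
  have "V = (\<Sum>i<N. (exp (a * c i) - poly q (c i)) * ck i)"
    using Sp unfolding V_def by (simp add: left_diff_distrib sum_subtractf)
  also have "\<dots> \<le> (\<Sum>i<N. \<bar>exp (a * c i) - poly q (c i)\<bar>)"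
    by (intro sum_mono mult_le_abs1) (simp add: ck_def)
  also have "\<dots> < (\<Sum>i<N. T / 2)"
  proof (rule sum_strict_mono)
    fix i assume "i \<in> {..<N}"
    have "\<bar>c i\<bar> \<le> 1" by (simp add: c_def)
    then show "\<bar>exp (a * c i) - poly q (c i)\<bar> < T / 2" using H unfolding T_def by (meson not_le)
  qed (use N in auto)
  also have "\<dots> = T * (real N / 2)" by simp
  finally show False using VT by linarith
qed


definition errB :: "real \<Rightarrow> real poly \<Rightarrow> real" where
  "errB B p = (SUP x\<in>{0..B}. \<bar>poly p x - exp x\<bar>)"

lemma approx_degree_errB:
  "approx_degree B \<delta> exp = (LEAST n. \<exists>p. degree p = n \<and> 0 < degree p \<and> errB B p < \<delta>)"
  unfolding approx_degree_def errB_def ..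

lemma errB_bdd: fixes p :: "real poly" and B :: real assumes "B \<ge> 0" shows "bdd_above ((\<lambda>x. \<bar>poly p x - exp x\<bar>) ` {0..B})"
proof -
  have "\<exists>x\<in>{0..B}. \<forall>y\<in>{0..B}. \<bar>poly p y - exp y\<bar> \<le> \<bar>poly p x - exp x\<bar>"
    using assms by (intro continuous_attains_sup[of "{0..B}" "\<lambda>x. \<bar>poly p x - exp x\<bar>"]) (auto intro!: continuous_intros)
  then show ?thesis by (auto intro: bdd_aboveI2)
qed

lemma errB_ge: assumes "0 \<le> x" "x \<le> B" shows "\<bar>poly p x - exp x\<bar> \<le> errB B p"
  unfolding errB_def using assms by (intro cSUP_upper errB_bdd) auto

lemma errB_le: assumes "B \<ge> 0" "\<And>x. 0 \<le> x \<Longrightarrow> x \<le> B \<Longrightarrow> \<bar>poly p x - exp x\<bar> \<le> M" shows "errB B p \<le> M"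
  unfolding errB_def using assms by (intro cSUP_least) auto

lemma exact_degree_adjust:
  fixes p0 :: "real poly"
  assumes B: "B > 0" and n: "n \<ge> 1" and dp: "degree p0 \<le> n" and \<eta>: "\<eta> < \<delta>"
    and err: "\<And>x. 0 \<le> x \<Longrightarrow> x \<le> B \<Longrightarrow> \<bar>poly p0 x - exp x\<bar> \<le> \<eta>"
  shows "\<exists>p. degree p = n \<and> 0 < degree p \<and> errB B p < \<delta>"
proof -
  define e0 where "e0 = (\<delta> - \<eta>) / (2 * (B ^ n + 1))"
  have Bn: "B ^ n \<ge> 0" using B by simp
  have e0: "e0 > 0" unfolding e0_def using \<eta> Bn by (intro divide_pos_pos) auto
  define e where "e = (if coeff p0 n + e0 \<noteq> 0 then e0 else e0 / 2)"
  have e: "e > 0" "e \<le> e0" "coeff p0 n + e \<noteq> 0" using e0 by (auto simp: e_def)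
  define p where "p = p0 + monom e n"
  have "degree p \<le> n" unfolding p_def
    using dp degree_monom_le[of e n] by (intro degree_add_le) auto
  moreover have "coeff p n \<noteq> 0" using e by (simp add: p_def)
  ultimately have dpn: "degree p = n" by (simp add: le_antisym le_degree)
  have "e * B ^ n < \<delta> - \<eta>"
  proof -
    have "e * B ^ n \<le> e0 * B ^ n" using e Bn by (intro mult_right_mono) auto
    also have "\<dots> = (\<delta> - \<eta>) * (B ^ n / (2 * (B ^ n + 1)))" by (simp add: e0_def)
    also have "\<dots> < (\<delta> - \<eta>) * 1" using \<eta> Bn by (intro mult_strict_left_mono) auto
    finally show ?thesis by simp
  qed
  moreover have "errB B p \<le> \<eta> + e * B ^ n"
  proof (rule errB_le)
    fix x assume x: "0 \<le> x" "x \<le> B"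
    have "\<bar>poly p x - exp x\<bar> \<le> \<bar>poly p0 x - exp x\<bar> + \<bar>e * x ^ n\<bar>"
      by (simp add: p_def poly_monom)
    also have "\<bar>e * x ^ n\<bar> \<le> e * B ^ n" using x e by (simp add: abs_mult power_mono)
    finally show "\<bar>poly p x - exp x\<bar> \<le> \<eta> + e * B ^ n" using err[OF x] by linarith
  qed (use B in auto)
  ultimately have "errB B p < \<delta>" by linarith
  then show ?thesis using dpn n by (intro exI[of _ p]) auto
qed

lemma upper_interval:
  fixes B \<delta> \<rho> :: real and n :: nat
  assumes B: "B > 0" and n: "n \<ge> 1" and \<rho>: "\<rho> \<ge> 1"
    and H: "exp (B/2) * (2 * exp (B/2 * (\<rho> + 1/\<rho>) / 2) / \<rho> ^ (n+1)) < \<delta>"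
  shows "\<exists>p. degree p = n \<and> 0 < degree p \<and> errB B p < \<delta>"
proof -
  define a where "a = B / 2"
  have a: "a > 0" using B by (simp add: a_def)
  define \<eta>0 where "\<eta>0 = 2 * exp (a * (\<rho> + 1/\<rho>) / 2) / \<rho> ^ (n+1)"
  define \<epsilon> where "\<epsilon> = (\<delta> / exp a - \<eta>0) / 2"
  have H': "exp a * \<eta>0 < \<delta>" using H by (simp add: a_def \<eta>0_def)
  have "\<eta>0 < \<delta> / exp a" using H' by (simp add: field_simps)
  then have \<epsilon>: "\<epsilon> > 0" by (simp add: \<epsilon>_def)
  obtain q where q: "degree q \<le> n" "\<And>t. \<bar>t\<bar> \<le> 1 \<Longrightarrow> \<bar>exp (a * t) - poly q t\<bar> \<le> \<eta>0 + \<epsilon>"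
    using cheb_approx_upper[OF a \<rho> \<epsilon>, of n] unfolding \<eta>0_def by blast
  define p0 where "p0 = smult (exp a) (pcompose q [:-1, 1/a:])"
  have "degree p0 \<le> n" unfolding p0_def
    using degree_pcompose_le[of q "[:-1, 1/a:]"] q(1) by (simp add: order_trans)
  moreover have "\<bar>poly p0 x - exp x\<bar> \<le> exp a * (\<eta>0 + \<epsilon>)" if x: "0 \<le> x" "x \<le> B" for x
  proof -
    define t where "t = x / a - 1"
    have t: "\<bar>t\<bar> \<le> 1" using x a by (simp add: t_def a_def abs_le_iff field_simps)
    have ex: "exp x = exp a * exp (a * t)" using a by (simp add: t_def field_simps exp_add[symmetric])
    have "poly p0 x = exp a * poly q t" by (simp add: p0_def poly_pcompose t_def field_simps)
    then have "\<bar>poly p0 x - exp x\<bar> = exp a * \<bar>exp (a * t) - poly q t\<bar>"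
      by (simp add: ex abs_mult right_diff_distrib[symmetric] abs_minus_commute)
    also have "\<dots> \<le> exp a * (\<eta>0 + \<epsilon>)" using q(2)[OF t] by simp
    finally show ?thesis .
  qed
  moreover have "exp a * (\<eta>0 + \<epsilon>) < \<delta>"
  proof -
    have "exp a * (\<eta>0 + \<epsilon>) = (exp a * \<eta>0 + \<delta>) / 2" by (simp add: \<epsilon>_def field_simps)
    then show ?thesis using H' by simp
  qed
  ultimately show ?thesis using exact_degree_adjust[OF B n] by blast
qed

lemma approx_degree_le:
  assumes "degree p = n" "0 < degree p" "errB B p < \<delta>"
  shows "approx_degree B \<delta> exp \<le> n"
  unfolding approx_degree_errB using assms by (intro Least_le) blast

lemma lower_interval:
  fixes B \<delta> :: real and k j :: nat
  assumes B: "B > 0" and k: "k \<ge> 1"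
    and ex: "\<exists>p. degree p = n0 \<and> 0 < degree p \<and> errB B p < \<delta>"
    and H: "\<delta> \<le> exp (B/2) * ((B/4)^(k+2*j) / (fact j * fact (k+j)) / 2)"
  shows "approx_degree B \<delta> exp \<ge> k"
proof (rule ccontr)
  assume "\<not> ?thesis"
  then have lt: "approx_degree B \<delta> exp < k" by simp
  obtain p where p: "degree p = approx_degree B \<delta> exp" "0 < degree p" "errB B p < \<delta>"
    using LeastI_ex[of "\<lambda>n. \<exists>p. degree p = n \<and> 0 < degree p \<and> errB B p < \<delta>"] ex
    unfolding approx_degree_errB by blast
  define a where "a = B / 2"
  have a: "a > 0" using B by (simp add: a_def)
  define q where "q = smult (exp (-a)) (pcompose p [:a, a:])"
  have "degree q \<le> degree p" unfolding q_def
    using degree_pcompose_le[of p "[:a, a:]"] by (simp add: order_trans)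
  then have dq: "degree q < k" using p(1) lt by simp
  obtain t where t: "\<bar>t\<bar> \<le> 1" "(a/2)^(k+2*j) / (fact j * fact (k+j)) / 2 \<le> \<bar>exp (a*t) - poly q t\<bar>"
    using cheb_lower[OF a k dq] by blast
  define x where "x = a + a * t"
  have t1: "-1 \<le> t" "t \<le> 1" using t(1) by auto
  have "a * (-1) \<le> a * t" using t1 a by (intro mult_left_mono) auto
  moreover have "a * t \<le> a * 1" using t1 a by (intro mult_left_mono) auto
  ultimately have x: "0 \<le> x" "x \<le> B" by (auto simp: x_def a_def)
  have pq: "poly q t = exp (-a) * poly p x" by (simp add: q_def poly_pcompose x_def algebra_simps)
  have ea: "exp (a * t) = exp (-a) * exp x" by (simp add: x_def exp_add[symmetric])
  have "\<bar>exp (a*t) - poly q t\<bar> = exp (-a) * \<bar>poly p x - exp x\<bar>"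
    by (simp add: pq ea abs_mult right_diff_distrib[symmetric] abs_minus_commute)
  then have "exp a * ((a/2)^(k+2*j) / (fact j * fact (k+j)) / 2) \<le> exp a * (exp (-a) * \<bar>poly p x - exp x\<bar>)"
    using t(2) by (intro mult_left_mono) auto
  then have "exp a * ((a/2)^(k+2*j) / (fact j * fact (k+j)) / 2) \<le> \<bar>poly p x - exp x\<bar>"
    by (simp add: mult.assoc[symmetric] exp_minus_inverse)
  then have "\<delta> \<le> \<bar>poly p x - exp x\<bar>" using H by (simp add: a_def)
  also have "\<dots> \<le> errB B p" using x by (rule errB_ge)
  finally show False using p(3) by simp
qed



lemma ln_fact_le:
  assumes "n \<ge> 1" shows "ln (fact n) \<le> 1 + (real n + 1) * ln (real n) - real n"
  using assms
proof (induction n rule: dec_induct)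
  case base then show ?case by simp
next
  case (step n)
  have n: "real n \<ge> 1" using step by simp
  have key: "1 \<le> (real n + 1) * (ln (real n + 1) - ln (real n))"
  proof -
    have "ln (real n / (real n + 1)) \<le> real n / (real n + 1) - 1"
      using n by (intro ln_le_minus_one) auto
    moreover have "ln (real n / (real n + 1)) = ln (real n) - ln (real n + 1)"
      using n by (simp add: ln_div)
    moreover have "real n / (real n + 1) - 1 = - 1 / (real n + 1)" using n by (simp add: field_simps)
    ultimately have "ln (real n + 1) - ln (real n) \<ge> 1 / (real n + 1)" by simp
    then show ?thesis using n by (simp add: field_simps)
  qed
  have "ln (fact (Suc n)) = ln (real n + 1) + ln (fact n)"
    by (simp add: ln_mult add.commute)
  also have "\<dots> \<le> ln (real n + 1) + (1 + (real n + 1) * ln (real n) - real n)"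
    using step.IH by simp
  also have "\<dots> \<le> 1 + (real (Suc n) + 1) * ln (real (Suc n)) - real (Suc n)"
    using key by (simp add: algebra_simps)
  finally show ?case .
qed

lemma ln_fact_le_simple: "ln (fact n) \<le> real n * ln (real n)"
proof (cases "n = 0")
  case False
  have "fact n \<le> (real n) ^ n" using fact_le_power[of n] by simp
  then have "ln (fact n) \<le> ln (real n ^ n)" by (intro ln_mono) auto
  then show ?thesis using False by (simp add: ln_realpow)
qed simp

definition Rr :: "real \<Rightarrow> real" where "Rr x = sqrt (x\<^sup>2 + 1)"

lemma Rr_gt: "Rr x > x" "Rr x > - x" "Rr x \<ge> 1" "Rr x > 0"
proof -
  have "x\<^sup>2 < x\<^sup>2 + 1" by simp
  then have "sqrt (x\<^sup>2) < Rr x" unfolding Rr_def by (rule real_sqrt_less_mono)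
  then show "Rr x > x" "Rr x > - x" by auto
  show "Rr x \<ge> 1" unfolding Rr_def by simp
  then show "Rr x > 0" by simp
qed

lemma Rr_prod: "(Rr x - x) * (Rr x + x) = 1"
proof -
  have "(Rr x)\<^sup>2 = x\<^sup>2 + 1" unfolding Rr_def by simp
  then show ?thesis by (simp add: algebra_simps power2_eq_square)
qed

lemma G_alt: "G x = Rr x - x * ln (Rr x + x)"
proof -
  have "ln (Rr x - x) = - ln (Rr x + x)"
  proof -
    have p: "Rr x - x > 0" "Rr x + x > 0" using Rr_gt[of x] by auto
    have "ln (Rr x - x) + ln (Rr x + x) = ln ((Rr x - x) * (Rr x + x))"
      using p by (simp add: ln_mult)
    also have "\<dots> = 0" by (simp add: Rr_prod)
    finally show ?thesis by simp
  qed
  then show ?thesis unfolding G_def Rr_def[symmetric] by simp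
qed


lemma G_deriv: "(G has_real_derivative ln (Rr x - x)) (at x)"
proof -
  have p: "Rr x - x > 0" "Rr x > 0" using Rr_gt[of x] by auto
  have G_eq: "G = (\<lambda>x. Rr x + x * ln (Rr x - x))" by (rule ext) (simp only: G_def Rr_def)
  have R: "(Rr has_real_derivative x / Rr x) (at x)"
  proof -
    have d1: "((\<lambda>x. x\<^sup>2 + 1) has_real_derivative 2 * x) (at x)"
      by (rule derivative_eq_intros refl | simp)+
    have pos: "0 < x\<^sup>2 + (1::real)" by (rule add_nonneg_pos[OF zero_le_power2 zero_less_one])
    have eqR: "Rr = (\<lambda>x. sqrt (x\<^sup>2 + 1))" by (rule ext) (simp only: Rr_def)
    have "(Rr has_real_derivative inverse (Rr x) / 2 * (2 * x)) (at x)"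
      by (simp only: eqR) (rule DERIV_chain2[OF DERIV_real_sqrt[OF pos] d1])
    moreover have "inverse r / 2 * (2 * x) = x / r" for r :: real by (simp add: field_simps)
    ultimately show ?thesis by simp
  qed
  have d2: "((\<lambda>x. Rr x - x) has_real_derivative (x / Rr x - 1)) (at x)"
    using DERIV_diff[OF R DERIV_ident] .
  have d3: "((\<lambda>x. ln (Rr x - x)) has_real_derivative inverse (Rr x - x) * (x / Rr x - 1)) (at x)"
    by (rule DERIV_chain2[OF DERIV_ln[OF p(1)] d2])
  have d4: "((\<lambda>x. x * ln (Rr x - x)) has_real_derivative
      (1 * ln (Rr x - x) + inverse (Rr x - x) * (x / Rr x - 1) * x)) (at x)"
    by (rule DERIV_mult[OF DERIV_ident d3])
  have d5: "((\<lambda>x. Rr x + x * ln (Rr x - x)) has_real_derivative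
      (x / Rr x + (1 * ln (Rr x - x) + inverse (Rr x - x) * (x / Rr x - 1) * x))) (at x)"
    by (rule DERIV_add[OF R d4])
  have alg: "x / r + (1 * ln (r - x) + inverse (r - x) * (x / r - 1) * x) = ln (r - x)"
    if "r - x > 0" "r > 0" for r
  proof -
    have "inverse (r - x) * (x / r - 1) = - 1 / r" using that by (simp add: field_simps)
    then show ?thesis by simp
  qed
  show ?thesis unfolding G_eq using d5 by (subst (asm) alg[OF p])
qed

lemma G_strict_dec: assumes "0 < x" "x < y" shows "G y < G x"
proof -
  have "\<exists>D. (G has_real_derivative D) (at t) \<and> D < 0" if "x \<le> t" "t \<le> y" for t
  proof -
    have t: "t > 0" using that assms by simp
    have "Rr t - t < 1"
    proof -
      have "(Rr t - t) * (Rr t + t) = 1" by (rule Rr_prod)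
      moreover have "Rr t + t > 1" using Rr_gt(3)[of t] t by simp
      moreover have "Rr t - t > 0" using Rr_gt[of t] by simp
      ultimately have "Rr t - t = 1 / (Rr t + t)" by (simp add: field_simps)
      then show ?thesis using \<open>Rr t + t > 1\<close> by simp
    qed
    moreover have "Rr t - t > 0" using Rr_gt[of t] by simp
    ultimately have "ln (Rr t - t) < 0" by simp
    then show ?thesis using G_deriv by blast
  qed
  then show ?thesis by (rule DERIV_neg_imp_decreasing[OF assms(2)])
qed

lemma G_tendsto: assumes "(f \<longlongrightarrow> c) F" shows "((\<lambda>k. G (f k)) \<longlongrightarrow> G c) F"
proof -
  have "isCont G c" using G_deriv by (rule DERIV_isCont)
  then show ?thesis using assms by (rule isCont_tendsto_compose)
qed


lemma ratio_lemma:
  fixes X d :: "nat \<Rightarrow> real" and c :: real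
  assumes X: "filterlim X at_top sequentially" and c: "c > 0"
    and H: "\<And>\<epsilon>. 0 < \<epsilon> \<Longrightarrow> \<epsilon> < c \<Longrightarrow>
       eventually (\<lambda>k. (c - \<epsilon>) * X k \<le> d k \<and> d k \<le> (c + \<epsilon>) * X k + 2) sequentially"
  shows "(\<lambda>k. d k / X k) \<longlonglongrightarrow> c"
proof (rule tendstoI)
  fix e :: real assume e: "e > 0"
  define \<epsilon> where "\<epsilon> = min (e/2) (c/2)"
  have \<epsilon>: "0 < \<epsilon>" "\<epsilon> < c" "\<epsilon> \<le> e/2" using e c by (auto simp: \<epsilon>_def)
  have ev1: "eventually (\<lambda>k. X k > 4 / e) sequentially"
    using X by (simp add: filterlim_at_top_dense)
  show "eventually (\<lambda>k. dist (d k / X k) c < e) sequentially"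
    using H[OF \<epsilon>(1,2)] ev1
  proof eventually_elim
    case (elim k)
    have "4 / e > 0" using e by simp
    then have Xp: "X k > 0" using elim(2) by linarith
    have "2 / X k < e / 2"
    proof -
      have "2 / X k < 2 / (4 / e)" using elim(2) e Xp by (intro divide_strict_left_mono) auto
      also have "\<dots> = e / 2" by simp
      finally show ?thesis .
    qed
    moreover have "d k / X k \<le> c + \<epsilon> + 2 / X k"
    proof -
      have "d k / X k \<le> ((c + \<epsilon>) * X k + 2) / X k" using elim(1) Xp by (intro divide_right_mono) auto
      also have "\<dots> = c + \<epsilon> + 2 / X k" using Xp by (simp add: field_simps)
      finally show ?thesis .
    qed
    moreover have "c - \<epsilon> \<le> d k / X k" using elim(1) Xp by (simp add: pos_le_divide_eq)
    ultimately show ?case using \<epsilon> unfolding dist_real_def by (simp add: abs_less_iff)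
  qed
qed

lemma floor_ratio:
  fixes a :: "nat \<Rightarrow> real" and c :: real
  assumes a: "filterlim a at_top sequentially" and c: "c \<ge> 0"
  shows "(\<lambda>k. real (nat \<lfloor>c * a k\<rfloor>) / a k) \<longlonglongrightarrow> c"
proof (rule tendsto_sandwich)
  have ap: "eventually (\<lambda>k. a k > 0) sequentially" using a by (simp add: filterlim_at_top_dense)
  have inv0: "(\<lambda>k. 1 / a k) \<longlonglongrightarrow> 0"
    using tendsto_inverse_0_at_top[OF a] by (simp add: inverse_eq_divide)
  show "eventually (\<lambda>k. c - 1 / a k \<le> real (nat \<lfloor>c * a k\<rfloor>) / a k) sequentially"
    using ap
  proof eventually_elim
    case (elim k)
    have "c * a k - 1 \<le> real (nat \<lfloor>c * a k\<rfloor>)" by linarith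
    then have "(c * a k - 1) / a k \<le> real (nat \<lfloor>c * a k\<rfloor>) / a k" using elim by (intro divide_right_mono) auto
    moreover have "(c * a k - 1) / a k = c - 1 / a k" using elim by (simp add: field_simps)
    ultimately show ?case by simp
  qed
  show "eventually (\<lambda>k. real (nat \<lfloor>c * a k\<rfloor>) / a k \<le> c + 1 / a k) sequentially"
    using ap
  proof eventually_elim
    case (elim k)
    have ca: "c * a k \<ge> 0" using c elim by simp
    then have "real (nat \<lfloor>c * a k\<rfloor>) = of_int \<lfloor>c * a k\<rfloor>" by simp
    then have "real (nat \<lfloor>c * a k\<rfloor>) \<le> c * a k + 1" using of_int_floor_le[of "c * a k"] by linarith
    then have "real (nat \<lfloor>c * a k\<rfloor>) / a k \<le> (c * a k + 1) / a k" using elim by (intro divide_right_mono) auto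
    also have "\<dots> = c + 1 / a k" using elim by (simp add: field_simps)
    finally show ?case .
  qed
  show "(\<lambda>k. c - 1 / a k) \<longlonglongrightarrow> c" using tendsto_diff[OF tendsto_const inv0, of c] by simp
  show "(\<lambda>k. c + 1 / a k) \<longlonglongrightarrow> c" using tendsto_add[OF tendsto_const inv0, of c] by simp
qed

lemma ceil_ratio:
  fixes a :: "nat \<Rightarrow> real" and c :: real
  assumes a: "filterlim a at_top sequentially" and c: "c \<ge> 0"
  shows "(\<lambda>k. (real (nat \<lceil>c * a k\<rceil>) + 1) / a k) \<longlonglongrightarrow> c"
proof (rule tendsto_sandwich)
  have ap: "eventually (\<lambda>k. a k > 0) sequentially" using a by (simp add: filterlim_at_top_dense)
  have inv0: "(\<lambda>k. 2 / a k) \<longlonglongrightarrow> 0"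
    using tendsto_mult[OF tendsto_const tendsto_inverse_0_at_top[OF a], of 2] by (simp add: inverse_eq_divide)
  show "eventually (\<lambda>k. c \<le> (real (nat \<lceil>c * a k\<rceil>) + 1) / a k) sequentially"
    using ap
  proof eventually_elim
    case (elim k)
    have "c * a k \<le> real (nat \<lceil>c * a k\<rceil>) + 1" by linarith
    then have "(c * a k) / a k \<le> (real (nat \<lceil>c * a k\<rceil>) + 1) / a k" using elim by (intro divide_right_mono) auto
    then show ?case using elim by simp
  qed
  show "eventually (\<lambda>k. (real (nat \<lceil>c * a k\<rceil>) + 1) / a k \<le> c + 2 / a k) sequentially"
    using ap
  proof eventually_elim
    case (elim k)
    have "c * a k \<ge> 0" using c elim by simp
    then have "real (nat \<lceil>c * a k\<rceil>) + 1 \<le> c * a k + 2" by linarith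
    then have "(real (nat \<lceil>c * a k\<rceil>) + 1) / a k \<le> (c * a k + 2) / a k" using elim by (intro divide_right_mono) auto
    also have "\<dots> = c + 2 / a k" using elim by (simp add: field_simps)
    finally show ?case .
  qed
  show "(\<lambda>k. c) \<longlonglongrightarrow> c" by simp
  show "(\<lambda>k. c + 2 / a k) \<longlonglongrightarrow> c" using tendsto_add[OF tendsto_const inv0, of c] by simp
qed


lemma upper_G:
  fixes B L c :: real and n :: nat
  assumes B: "B > 0" and n: "n \<ge> 1" and c: "c = (real n + 1) / (B/2)"
    and H: "B/2 * (1 + G c) + ln 2 + L < 0"
  shows "\<exists>p. degree p = n \<and> 0 < degree p \<and> errB B p < exp (- L)"
proof -
  define a where "a = B/2"
  have a: "a > 0" using B by (simp add: a_def)
  have c0: "c \<ge> 0" using c B by simp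
  define \<rho> where "\<rho> = Rr c + c"
  have \<rho>1: "\<rho> \<ge> 1" using Rr_gt(3)[of c] c0 by (simp add: \<rho>_def)
  have inv: "1 / \<rho> = Rr c - c"
  proof -
    have "(Rr c - c) * \<rho> = 1" using Rr_prod[of c] by (simp add: \<rho>_def)
    then show ?thesis using \<rho>1 by (simp add: field_simps)
  qed
  have r2: "(\<rho> + 1/\<rho>) / 2 = Rr c" unfolding inv by (simp add: \<rho>_def)
  have pw: "\<rho> ^ (n+1) = exp (a * c * ln \<rho>)"
  proof -
    have "a * c = real n + 1" using a by (simp add: c a_def)
    moreover have "\<rho> ^ (n+1) = exp (real (n+1) * ln \<rho>)" using \<rho>1 by (subst exp_of_nat_mult) simp
    ultimately show ?thesis by simp
  qed
  have "exp (B/2) * (2 * exp (B/2 * (\<rho> + 1/\<rho>) / 2) / \<rho> ^ (n+1)) = exp (ln 2 + a * (1 + G c))"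
  proof -
    have "exp (B/2) * (2 * exp (B/2 * (\<rho> + 1/\<rho>) / 2) / \<rho> ^ (n+1))
        = exp (a + ln 2 + a * Rr c - a * c * ln \<rho>)"
      unfolding pw using r2 by (simp add: a_def exp_add exp_diff mult.assoc)
    also have "a + ln 2 + a * Rr c - a * c * ln \<rho> = ln 2 + a * (1 + G c)"
      by (simp add: G_alt \<rho>_def algebra_simps)
    finally show ?thesis .
  qed
  also have "\<dots> < exp (- L)" using H by (simp add: a_def)
  finally show ?thesis using upper_interval[OF B n \<rho>1] by blast
qed

lemma lower_S:
  fixes B L :: real and K J n0 :: nat
  assumes B: "B > 0" and K: "K \<ge> 1" and J: "J \<ge> 1"
    and ex: "\<exists>p. degree p = n0 \<and> 0 < degree p \<and> errB B p < exp (- L)"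
    and H: "- L \<le> B/2 + (real K + 2 * real J) * ln (B/4) - (1 + (real J + 1) * ln (real J) - real J)
            - (1 + (real K + real J + 1) * ln (real K + real J) - (real K + real J)) - ln 2"
  shows "approx_degree B (exp (- L)) exp \<ge> K"
proof (rule lower_interval[OF B K ex, of J])
  have fJ: "ln (fact J) \<le> 1 + (real J + 1) * ln (real J) - real J" using ln_fact_le[OF J] .
  have fK: "ln (fact (K+J)) \<le> 1 + (real (K+J) + 1) * ln (real (K+J)) - real (K+J)"
    using ln_fact_le[of "K+J"] J by simp
  have "ln (exp (B/2) * ((B/4)^(K+2*J) / (fact J * fact (K+J)) / 2))
      = B/2 + real (K+2*J) * ln (B/4) - ln (fact J) - ln (fact (K+J)) - ln 2"
    using B by (simp add: ln_mult ln_div ln_realpow)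
  also have "\<dots> \<ge> - L" using H fJ fK by simp
  finally have "- L \<le> ln (exp (B/2) * ((B/4)^(K+2*J) / (fact J * fact (K+J)) / 2))" .
  then have "exp (- L) \<le> exp (ln (exp (B/2) * ((B/4)^(K+2*J) / (fact J * fact (K+J)) / 2)))"
    by simp
  also have "\<dots> = exp (B/2) * ((B/4)^(K+2*J) / (fact J * fact (K+J)) / 2)"
    using B by (intro exp_ln) simp
  finally show "exp (- L) \<le> exp (B/2) * ((B/4)^(K+2*J) / (fact J * fact (K+J)) / 2)" .
qed


lemma Psi_identity:
  fixes c :: real assumes c: "c \<ge> 0"
  defines "s \<equiv> (Rr c - c) / 2"
  shows "- (c + 2*s) * ln 2 - s * ln s + s - (c + s) * ln (c + s) + c + s = G c"
proof -
  have p: "Rr c - c > 0" "Rr c + c > 0" using Rr_gt[of c] c by auto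
  have l1: "ln s = ln (Rr c - c) - ln 2" unfolding s_def using p by (simp add: ln_div)
  have cs: "c + s = (Rr c + c) / 2" unfolding s_def by (simp add: field_simps)
  have l2: "ln (c + s) = ln (Rr c + c) - ln 2" unfolding cs using p by (simp add: ln_div)
  have l3: "ln (Rr c - c) = - ln (Rr c + c)"
  proof -
    have "ln (Rr c - c) + ln (Rr c + c) = ln ((Rr c - c) * (Rr c + c))" using p by (simp add: ln_mult)
    also have "\<dots> = 0" by (simp add: Rr_prod)
    finally show ?thesis by simp
  qed
  have c2s: "c + 2 * s = Rr c" unfolding s_def by (simp add: field_simps)
  show ?thesis unfolding l1 l2 l3 G_alt unfolding s_def
    by (simp add: field_simps)
qed

lemma E_identity:
  fixes a K J :: real assumes a: "a > 0" and K: "K > 0" and J: "J > 0"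
  shows "a + (K + 2 * J) * ln (2*a/4) - (1 + (J + 1) * ln J - J)
            - (1 + (K + J + 1) * ln (K + J) - (K + J)) - ln 2
       = a * (1 - (K/a + 2*(J/a)) * ln 2 - (J/a + 1/a) * ln (J/a) + J/a
              - (K/a + J/a + 1/a) * ln (K/a + J/a) + K/a + J/a - (2 * ln a + 2 + ln 2) / a)"
proof -
  define c where "c = K / a"
  define s where "s = J / a"
  have Kc: "K = c * a" and Js: "J = s * a" using a by (simp_all add: c_def s_def)
  have cp: "c > 0" "s > 0" using a K J by (simp_all add: c_def s_def)
  have l1: "ln (2*a/4) = ln a - ln 2"
  proof -
    have "2*a/4 = a / 2" by simp
    then show ?thesis using a by (simp add: ln_div)
  qed
  have l2: "ln J = ln s + ln a" unfolding Js using cp a by (simp add: ln_mult)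
  have l3: "ln (K + J) = ln (c + s) + ln a"
  proof -
    have "K + J = (c + s) * a" by (simp add: Kc Js algebra_simps)
    then show ?thesis using cp a by (simp add: ln_mult)
  qed
  have eq: "K/a = c" "J/a = s" by (simp_all add: c_def s_def)
  show ?thesis unfolding l1 l2 l3 eq unfolding Kc Js using a
    by (simp add: field_simps)
qed


lemma ln_over_x_lim: "((\<lambda>x::real. ln x / x) \<longlongrightarrow> 0) at_top"
  by real_asymp

lemma main23:
  fixes B L :: "nat \<Rightarrow> real" and lam c0 :: real
  assumes B1: "\<And>k. B k \<ge> 1" and Binf: "filterlim B at_top sequentially"
    and Llim: "(\<lambda>k. L k / (B k / 2)) \<longlonglongrightarrow> lam"
    and c0: "c0 > 0" and eq: "1 + G c0 + lam = 0"
  shows "(\<lambda>k. real (approx_degree (B k) (exp (- L k)) exp) / (B k / 2)) \<longlonglongrightarrow> c0"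
proof -
  define a where "a k = B k / 2" for k
  have ainf: "filterlim a at_top sequentially"
  proof (subst filterlim_at_top, intro allI)
    fix Z
    show "eventually (\<lambda>k. Z \<le> a k) sequentially"
      using Binf[unfolded filterlim_at_top, rule_format, of "2*Z"] by eventually_elim (simp add: a_def)
  qed
  have apos: "a k > 0" for k using B1[of k] by (simp add: a_def)
  have Bpos: "B k > 0" for k using B1[of k] by simp
  have Ba: "B k = 2 * a k" for k by (simp add: a_def)
  have inv0: "(\<lambda>k. 1 / a k) \<longlonglongrightarrow> 0"
    using tendsto_inverse_0_at_top[OF ainf] by (simp add: inverse_eq_divide)
  have lna: "(\<lambda>k. ln (a k) / a k) \<longlonglongrightarrow> 0"
    using filterlim_compose[OF ln_over_x_lim ainf] .
  have Llim': "(\<lambda>k. L k / a k) \<longlonglongrightarrow> lam" using Llim by (simp add: a_def)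
  define d where "d k = real (approx_degree (B k) (exp (- L k)) exp)" for k
  have ev_ge: "eventually (\<lambda>k. a k \<ge> Z) sequentially" for Z
    using ainf by (simp add: filterlim_at_top)
  have "(\<lambda>k. d k / a k) \<longlonglongrightarrow> c0"
  proof (rule ratio_lemma[OF ainf c0])
    fix \<epsilon> :: real assume \<epsilon>: "0 < \<epsilon>" "\<epsilon> < c0"
    define n where "n k = nat \<lceil>(c0 + \<epsilon>) * a k\<rceil>" for k
    define cU where "cU k = (real (n k) + 1) / a k" for k
    have cUlim: "cU \<longlonglongrightarrow> c0 + \<epsilon>"
      unfolding cU_def n_def using ceil_ratio[OF ainf, of "c0 + \<epsilon>"] \<epsilon> c0 by simp
    have Qlim: "(\<lambda>k. 1 + G (cU k) + ln 2 * (1 / a k) + L k / a k) \<longlonglongrightarrow> 1 + G (c0 + \<epsilon>) + ln 2 * 0 + lam"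
      by (intro tendsto_intros G_tendsto cUlim inv0 Llim')
    have "G (c0 + \<epsilon>) < G c0" using c0 \<epsilon> by (intro G_strict_dec) auto
    then have "1 + G (c0 + \<epsilon>) + ln 2 * 0 + lam < 0" using eq by simp
    then have evQ: "eventually (\<lambda>k. 1 + G (cU k) + ln 2 * (1 / a k) + L k / a k < 0) sequentially"
      using order_tendstoD(2)[OF Qlim] by blast
    have evn: "eventually (\<lambda>k. n k \<ge> 1) sequentially"
      using ev_ge[of "1 / (c0 + \<epsilon>)"]
    proof eventually_elim
      case (elim k)
      then have "(c0 + \<epsilon>) * a k \<ge> 1" using c0 \<epsilon> by (simp add: field_simps)
      then show ?case unfolding n_def by linarith
    qed
    have evU: "eventually (\<lambda>k. \<exists>p. degree p = n k \<and> 0 < degree p \<and> errB (B k) p < exp (- L k)) sequentially"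
      using evQ evn
    proof eventually_elim
      case (elim k)
      have "a k * (1 + G (cU k) + ln 2 * (1 / a k) + L k / a k) < 0"
        using elim(1) apos[of k] by (simp add: mult_pos_neg)
      then have H: "B k / 2 * (1 + G (cU k)) + ln 2 + L k < 0"
        using apos[of k] by (simp add: a_def field_simps)
      show ?case by (rule upper_G[OF Bpos elim(2) _ H]) (simp add: cU_def a_def)
    qed
    have evU2: "eventually (\<lambda>k. d k \<le> (c0 + \<epsilon>) * a k + 2) sequentially"
      using evU
    proof eventually_elim
      case (elim k)
      then obtain p where "degree p = n k" "0 < degree p" "errB (B k) p < exp (- L k)" by blast
      then have "approx_degree (B k) (exp (- L k)) exp \<le> n k" by (rule approx_degree_le)
      moreover have "real (n k) \<le> (c0 + \<epsilon>) * a k + 1"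
        unfolding n_def using apos[of k] c0 \<epsilon> by (simp add: of_nat_nat) linarith?
      ultimately show ?case unfolding d_def by linarith
    qed
    define c1 where "c1 = c0 - \<epsilon>"
    define s1 where "s1 = (Rr c1 - c1) / 2"
    have c1: "c1 > 0" using \<epsilon> by (simp add: c1_def)
    have s1: "s1 > 0" using Rr_gt(1)[of c1] by (simp add: s1_def)
    define K where "K k = nat \<lfloor>c1 * a k\<rfloor> + 1" for k
    define J where "J k = nat \<lfloor>s1 * a k\<rfloor>" for k
    define cL where "cL k = real (K k) / a k" for k
    define sL where "sL k = real (J k) / a k" for k
    have cLlim: "cL \<longlonglongrightarrow> c1"
    proof -
      have "cL = (\<lambda>k. real (nat \<lfloor>c1 * a k\<rfloor>) / a k + 1 / a k)"
        by (rule ext) (simp add: cL_def K_def add_divide_distrib)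
      moreover have "(\<lambda>k. real (nat \<lfloor>c1 * a k\<rfloor>) / a k + 1 / a k) \<longlonglongrightarrow> c1 + 0"
        by (intro tendsto_add floor_ratio[OF ainf] inv0) (use c1 in simp)
      ultimately show ?thesis by simp
    qed
    have sLlim: "sL \<longlonglongrightarrow> s1" unfolding sL_def J_def using floor_ratio[OF ainf, of s1] s1 by simp
    define lt where "lt k = (2 * ln (a k) + 2 + ln 2) / a k" for k
    have ltlim: "lt \<longlonglongrightarrow> 0"
    proof -
      have "lt = (\<lambda>k. 2 * (ln (a k) / a k) + (2 + ln 2) * (1 / a k))"
        by (rule ext) (simp add: lt_def add_divide_distrib)
      moreover have "(\<lambda>k. 2 * (ln (a k) / a k) + (2 + ln 2) * (1 / a k)) \<longlonglongrightarrow> 2 * 0 + (2 + ln 2) * 0"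
        by (intro tendsto_intros lna inv0)
      ultimately show ?thesis by simp
    qed
    define Fq where "Fq k = 1 - (cL k + 2 * sL k) * ln 2 - (sL k + 1 / a k) * ln (sL k) + sL k
        - (cL k + sL k + 1 / a k) * ln (cL k + sL k) + cL k + sL k - lt k + L k / a k" for k
    have Fqlim: "Fq \<longlonglongrightarrow> 1 - (c1 + 2 * s1) * ln 2 - (s1 + 0) * ln s1 + s1
        - (c1 + s1 + 0) * ln (c1 + s1) + c1 + s1 - 0 + lam"
      unfolding Fq_def
      by (intro tendsto_intros cLlim sLlim inv0 ltlim Llim') (use s1 c1 in auto)
    have "1 - (c1 + 2 * s1) * ln 2 - (s1 + 0) * ln s1 + s1
        - (c1 + s1 + 0) * ln (c1 + s1) + c1 + s1 - 0 + lam = 1 + G c1 + lam"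
      using Psi_identity[of c1, folded s1_def] c1 by (simp only: add_0_right diff_0_right) linarith
    moreover have "G c0 < G c1" using c1 \<epsilon> by (intro G_strict_dec) (auto simp: c1_def)
    ultimately have "0 < 1 - (c1 + 2 * s1) * ln 2 - (s1 + 0) * ln s1 + s1
        - (c1 + s1 + 0) * ln (c1 + s1) + c1 + s1 - 0 + lam" using eq by simp
    then have evF: "eventually (\<lambda>k. Fq k > 0) sequentially"
      using order_tendstoD(1)[OF Fqlim] by blast
    have evJ: "eventually (\<lambda>k. J k \<ge> 1) sequentially"
      using ev_ge[of "1 / s1"]
    proof eventually_elim
      case (elim k)
      then have "s1 * a k \<ge> 1" using s1 by (simp add: field_simps)
      then show ?case unfolding J_def by linarith
    qed
    have evL: "eventually (\<lambda>k. (c0 - \<epsilon>) * a k \<le> d k) sequentially"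
      using evF evJ evU
    proof eventually_elim
      case (elim k)
      have Kp: "K k \<ge> 1" by (simp add: K_def)
      have E: "a k + (real (K k) + 2 * real (J k)) * ln (2 * a k / 4) - (1 + (real (J k) + 1) * ln (real (J k)) - real (J k))
            - (1 + (real (K k) + real (J k) + 1) * ln (real (K k) + real (J k)) - (real (K k) + real (J k))) - ln 2
          = a k * (Fq k - L k / a k)"
      proof -
        have Kpos: "real (K k) > 0" using Kp by simp
        have Jpos: "real (J k) > 0" using elim(2) by simp
        show ?thesis
          by (subst E_identity[OF apos Kpos Jpos]) (simp add: Fq_def cL_def sL_def lt_def)
      qed
      have "a k * (Fq k - L k / a k) = a k * Fq k - L k" using apos[of k] by (simp add: field_simps)
      moreover have "a k * Fq k > 0" using elim(1) apos[of k] by simp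
      ultimately have H: "- L k \<le> B k / 2 + (real (K k) + 2 * real (J k)) * ln (B k / 4) - (1 + (real (J k) + 1) * ln (real (J k)) - real (J k))
            - (1 + (real (K k) + real (J k) + 1) * ln (real (K k) + real (J k)) - (real (K k) + real (J k))) - ln 2"
        using E by (simp add: Ba)
      have "approx_degree (B k) (exp (- L k)) exp \<ge> K k"
        by (rule lower_S[OF Bpos Kp elim(2) elim(3) H])
      moreover have "(c0 - \<epsilon>) * a k \<le> real (K k)"
        unfolding K_def c1_def[symmetric] using apos[of k] c1 by linarith
      ultimately show ?case unfolding d_def by linarith
    qed
    show "eventually (\<lambda>k. (c0 - \<epsilon>) * a k \<le> d k \<and> d k \<le> (c0 + \<epsilon>) * a k + 2) sequentially"
      using evL evU2 by eventually_elim simp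
  qed
  then show ?thesis by (simp add: d_def a_def)
qed


definition Phi :: "real \<Rightarrow> real \<Rightarrow> real" where
  "Phi u y = u / ln y * (ln 4 + ln u + ln y - ln (ln y))"

lemma Phi_identity:
  fixes K B L :: real
  assumes K: "K > 0" and B: "B > 0" and L: "L > 0" and y1: "L / B > 1"
  shows "K * ln (4 * K / B) = L * Phi (K / (L / ln (L / B))) (L / B)"
proof -
  define y where "y = L / B"
  have y: "y > 1" using y1 by (simp add: y_def)
  have lny: "ln y > 0" using y by simp
  define u where "u = K / (L / ln y)"
  have u: "u > 0" using K L lny by (simp add: u_def)
  have "4 * K / B = 4 * u * y / ln y" using lny L B by (simp add: u_def y_def field_simps)
  then have "ln (4 * K / B) = ln 4 + ln u + ln y - ln (ln y)"
    using u y lny by (simp add: ln_mult ln_div)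
  moreover have "L * (u / ln y) = K" using lny L by (simp add: u_def field_simps)
  ultimately show ?thesis unfolding Phi_def y_def[symmetric] u_def[symmetric]
    by (metis mult.assoc)
qed

lemma lnln_lim: "((\<lambda>y::real. ln (ln y) / ln y) \<longlongrightarrow> 0) at_top" by real_asymp
lemma invln_lim: "((\<lambda>y::real. 1 / ln y) \<longlongrightarrow> 0) at_top" by real_asymp
lemma inv_lim: "((\<lambda>y::real. 1 / y) \<longlongrightarrow> 0) at_top" by real_asymp
lemma ylny_lim: "filterlim (\<lambda>y::real. y / ln y) at_top at_top" by real_asymp

lemma Phi_lim:
  fixes u y :: "nat \<Rightarrow> real"
  assumes u: "u \<longlonglongrightarrow> u0" "u0 > 0" and y: "filterlim y at_top sequentially"
  shows "(\<lambda>k. Phi (u k) (y k)) \<longlonglongrightarrow> u0"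
proof -
  have l1: "(\<lambda>k. 1 / ln (y k)) \<longlonglongrightarrow> 0" using filterlim_compose[OF invln_lim y] .
  have l2: "(\<lambda>k. ln (ln (y k)) / ln (y k)) \<longlonglongrightarrow> 0" using filterlim_compose[OF lnln_lim y] .
  have ev: "eventually (\<lambda>k. y k > 1) sequentially" using y by (simp add: filterlim_at_top_dense)
  have lim: "(\<lambda>k. u k * ((ln 4 + ln (u k)) * (1 / ln (y k)) + 1 - ln (ln (y k)) / ln (y k)))
      \<longlonglongrightarrow> u0 * ((ln 4 + ln u0) * 0 + 1 - 0)"
    by (intro tendsto_intros u(1) l1 l2) (use u(2) in simp)
  have "eventually (\<lambda>k. u k * ((ln 4 + ln (u k)) * (1 / ln (y k)) + 1 - ln (ln (y k)) / ln (y k))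
      = Phi (u k) (y k)) sequentially"
    using ev
  proof eventually_elim
    case (elim k)
    then have "ln (y k) > 0" by simp
    then show ?case unfolding Phi_def by (simp add: field_simps)
  qed
  then show ?thesis using lim by (simp add: tendsto_cong)
qed

lemma upper_log:
  fixes B L \<rho> :: real and n :: nat
  assumes B: "B > 0" and n: "n \<ge> 1" and \<rho>: "\<rho> \<ge> 1"
    and H: "B/2 + ln 2 + B/2 * (\<rho> + 1/\<rho>) / 2 - (real n + 1) * ln \<rho> + L < 0"
  shows "\<exists>p. degree p = n \<and> 0 < degree p \<and> errB B p < exp (- L)"
proof (rule upper_interval[OF B n \<rho>])
  have pw: "\<rho> ^ (n+1) = exp (real (n+1) * ln \<rho>)" using \<rho> by (subst exp_of_nat_mult) simp
  have "exp (B/2) * (2 * exp (B/2 * (\<rho> + 1/\<rho>) / 2) / \<rho> ^ (n+1))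
      = exp (B/2 + ln 2 + B/2 * (\<rho> + 1/\<rho>) / 2 - (real n + 1) * ln \<rho>)"
    unfolding pw by (simp add: exp_add exp_diff add.commute mult.assoc)
  also have "\<dots> < exp (- L)" using H by simp
  finally show "exp (B/2) * (2 * exp (B/2 * (\<rho> + 1/\<rho>) / 2) / \<rho> ^ (n+1)) < exp (- L)" .
qed

lemma lower_log0:
  fixes B L :: real and K n0 :: nat
  assumes B: "B > 0" and K: "K \<ge> 1"
    and ex: "\<exists>p. degree p = n0 \<and> 0 < degree p \<and> errB B p < exp (- L)"
    and H: "- L \<le> B/2 + real K * ln (B/4) - real K * ln (real K) - ln 2"
  shows "approx_degree B (exp (- L)) exp \<ge> K"
proof (rule lower_interval[OF B K ex, of 0])
  have "ln (exp (B/2) * ((B/4)^(K+2*0) / (fact 0 * fact (K+0)) / 2))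
      = B/2 + real K * ln (B/4) - ln (fact K) - ln 2"
    using B by (simp add: ln_mult ln_div ln_realpow)
  also have "\<dots> \<ge> - L" using H ln_fact_le_simple[of K] by simp
  finally have "- L \<le> ln (exp (B/2) * ((B/4)^(K+2*0) / (fact 0 * fact (K+0)) / 2))" .
  then have "exp (- L) \<le> exp (ln (exp (B/2) * ((B/4)^(K+2*0) / (fact 0 * fact (K+0)) / 2)))"
    by simp
  also have "\<dots> = exp (B/2) * ((B/4)^(K+2*0) / (fact 0 * fact (K+0)) / 2)"
    using B by (intro exp_ln) simp
  finally show "exp (- L) \<le> exp (B/2) * ((B/4)^(K+2*0) / (fact 0 * fact (K+0)) / 2)" .
qed


lemma main1:
  fixes B L :: "nat \<Rightarrow> real"
  assumes B1: "\<And>k. B k \<ge> 1" and Lpos: "\<And>k. L k > 0"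
    and ylim: "filterlim (\<lambda>k. L k / B k) at_top sequentially"
  shows "(\<lambda>k. real (approx_degree (B k) (exp (- L k)) exp) / (L k / ln (L k / B k))) \<longlonglongrightarrow> 1"
proof -
  define y where "y k = L k / B k" for k
  define X where "X k = L k / ln (y k)" for k
  have Bpos: "B k > 0" for k using B1[of k] by simp
  have yinf: "filterlim y at_top sequentially" using ylim by (simp add: y_def[abs_def])
  have evy: "eventually (\<lambda>k. y k > 1) sequentially" using yinf by (simp add: filterlim_at_top_dense)
  have ypos: "y k > 0" for k using Lpos[of k] Bpos[of k] by (simp add: y_def)
  have LyB: "L k = y k * B k" for k using Bpos[of k] by (simp add: y_def)
  have Ly: "y k \<le> L k" for k
  proof -
    have "y k * 1 \<le> y k * B k" using B1[of k] ypos[of k] by (intro mult_left_mono) auto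
    then show ?thesis using LyB[of k] by simp
  qed
  have Linf: "filterlim L at_top sequentially"
    by (rule filterlim_at_top_mono[OF yinf]) (use Ly in auto)
  have XyB: "X k = B k * (y k / ln (y k))" for k unfolding X_def using LyB[of k] by simp
  have ylny_ge1: "y k / ln (y k) \<ge> 1" if "y k > 1" for k
  proof -
    have "ln (y k) \<le> y k - 1" using that by (intro ln_le_minus_one) simp
    moreover have "ln (y k) > 0" using that by simp
    ultimately show ?thesis by (simp add: field_simps)
  qed
  have evXB: "eventually (\<lambda>k. X k \<ge> B k) sequentially"
    using evy
  proof eventually_elim
    case (elim k)
    have "B k * 1 \<le> B k * (y k / ln (y k))" using ylny_ge1[OF elim] Bpos[of k]
      by (intro mult_left_mono) auto
    then show ?case unfolding XyB by simp
  qed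
  have Xinf: "filterlim X at_top sequentially"
  proof (rule filterlim_at_top_mono[OF filterlim_compose[OF ylny_lim yinf]])
    show "eventually (\<lambda>k. y k / ln (y k) \<le> X k) sequentially"
      using evy
    proof eventually_elim
      case (elim k)
      have "y k / ln (y k) \<ge> 0" using ylny_ge1[OF elim] by simp
      then have "1 * (y k / ln (y k)) \<le> B k * (y k / ln (y k))" using B1[of k]
        by (intro mult_right_mono) auto
      then show ?case unfolding XyB by simp
    qed
  qed
  have invL: "(\<lambda>k. 1 / L k) \<longlonglongrightarrow> 0"
    using tendsto_inverse_0_at_top[OF Linf] by (simp add: inverse_eq_divide)
  have invX: "(\<lambda>k. 1 / X k) \<longlonglongrightarrow> 0"
    using tendsto_inverse_0_at_top[OF Xinf] by (simp add: inverse_eq_divide)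
  have invy: "(\<lambda>k. 1 / y k) \<longlonglongrightarrow> 0" using filterlim_compose[OF inv_lim yinf] .
  have invlny: "(\<lambda>k. 1 / ln (y k)) \<longlonglongrightarrow> 0" using filterlim_compose[OF invln_lim yinf] .
  have evXge: "eventually (\<lambda>k. X k \<ge> Z) sequentially" for Z
    using Xinf by (simp add: filterlim_at_top)
  define d where "d k = real (approx_degree (B k) (exp (- L k)) exp)" for k
  have XLy: "X k * ln (y k) = L k" if "y k > 1" for k using that by (simp add: X_def)
  have "(\<lambda>k. d k / X k) \<longlonglongrightarrow> 1"
  proof (rule ratio_lemma[OF Xinf])
    fix \<epsilon> :: real assume \<epsilon>: "0 < \<epsilon>" "\<epsilon> < 1"
    define n where "n k = nat \<lceil>(1 + \<epsilon>) * X k\<rceil>" for k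
    define Kp where "Kp k = real (n k) + 1" for k
    define u where "u k = Kp k / X k" for k
    have ulim: "u \<longlonglongrightarrow> 1 + \<epsilon>"
      unfolding u_def Kp_def n_def using ceil_ratio[OF Xinf, of "1 + \<epsilon>"] \<epsilon> by simp
    define Wq where "Wq k = 9/16 * (1 / y k) + ln 2 * (1 / L k) + u k * (1 / ln (y k)) - Phi (u k) (y k) + 1" for k
    have Wqlim: "Wq \<longlonglongrightarrow> 9/16 * 0 + ln 2 * 0 + (1 + \<epsilon>) * 0 - (1 + \<epsilon>) + 1"
      unfolding Wq_def using \<epsilon>
      by (intro tendsto_intros invy invL ulim invlny Phi_lim[OF ulim _ yinf]) auto
    then have evW: "eventually (\<lambda>k. Wq k < 0) sequentially"
      using \<epsilon> by (intro order_tendstoD(2)[OF Wqlim]) simp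
    have evn: "eventually (\<lambda>k. n k \<ge> 1) sequentially"
      using evXge[of 1]
    proof eventually_elim
      case (elim k)
      have "\<epsilon> * X k \<ge> 0" using elim \<epsilon> by simp
      then have "(1 + \<epsilon>) * X k \<ge> 1" using elim by (simp add: algebra_simps)
      then show ?case unfolding n_def by linarith
    qed
    have evU: "eventually (\<lambda>k. \<exists>p. degree p = n k \<and> 0 < degree p \<and> errB (B k) p < exp (- L k)) sequentially"
      using evW evn evy evXB
    proof eventually_elim
      case (elim k)
      have Xp: "X k > 0" using elim(4) Bpos[of k] by linarith
      have KpX: "Kp k \<ge> X k"
      proof -
        have "\<epsilon> * X k \<ge> 0" using Xp \<epsilon> by simp
        then have "X k \<le> (1 + \<epsilon>) * X k" by (simp add: algebra_simps)
        moreover have "(1 + \<epsilon>) * X k \<le> real (nat \<lceil>(1 + \<epsilon>) * X k\<rceil>)" by linarith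
        ultimately show ?thesis unfolding Kp_def n_def by linarith
      qed
      have KpB: "Kp k \<ge> B k" using KpX elim(4) by simp
      have Kpp: "Kp k > 0" using KpB Bpos[of k] by simp
      define \<rho> where "\<rho> = 4 * Kp k / B k"
      have \<rho>1: "\<rho> \<ge> 1" using KpB Bpos[of k] by (simp add: \<rho>_def field_simps)
      have r1: "B k / 2 * (\<rho> + 1/\<rho>) / 2 = Kp k + B k * B k / (16 * Kp k)"
        using Bpos[of k] Kpp by (simp add: \<rho>_def field_simps)
      have r2: "B k * B k / (16 * Kp k) \<le> B k / 16"
        using Bpos[of k] Kpp KpB by (simp add: field_simps mult_right_mono)
      have r3: "Kp k * ln \<rho> = L k * Phi (u k) (y k)"
        using Phi_identity[OF Kpp Bpos Lpos, of k] elim(3) by (simp add: \<rho>_def u_def X_def y_def)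
      have r4: "L k * Wq k = 9/16 * B k + ln 2 + Kp k - L k * Phi (u k) (y k) + L k"
      proof -
        have "L k * (9/16 * (1 / y k)) = 9/16 * B k" using Lpos[of k] Bpos[of k] by (simp add: y_def)
        moreover have "L k * (ln 2 * (1 / L k)) = ln 2" using Lpos[of k] by simp
        moreover have "L k * (u k * (1 / ln (y k))) = Kp k"
          using XLy[OF elim(3)] Xp elim(3) Lpos[of k] by (simp add: u_def field_simps)
        ultimately show ?thesis unfolding Wq_def by (simp add: algebra_simps)
      qed
      have "L k * Wq k < 0" using elim(1) Lpos[of k] by (simp add: mult_pos_neg)
      then have H: "B k/2 + ln 2 + B k/2 * (\<rho> + 1/\<rho>) / 2 - (real (n k) + 1) * ln \<rho> + L k < 0"
        using r1 r2 r3 r4 unfolding Kp_def by linarith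
      show ?case by (rule upper_log[OF Bpos elim(2) \<rho>1 H])
    qed
    have evU2: "eventually (\<lambda>k. d k \<le> (1 + \<epsilon>) * X k + 2) sequentially"
      using evU evXge[of 0]
    proof eventually_elim
      case (elim k)
      then obtain p where "degree p = n k" "0 < degree p" "errB (B k) p < exp (- L k)" by blast
      then have "approx_degree (B k) (exp (- L k)) exp \<le> n k" by (rule approx_degree_le)
      moreover have "real (n k) \<le> (1 + \<epsilon>) * X k + 1"
        unfolding n_def using elim(2) \<epsilon> by (simp add: of_nat_nat) linarith?
      ultimately show ?case unfolding d_def by linarith
    qed
    define K where "K k = nat \<lfloor>(1 - \<epsilon>) * X k\<rfloor> + 1" for k
    define uL where "uL k = real (K k) / X k" for k
    have uLlim: "uL \<longlonglongrightarrow> 1 - \<epsilon>"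
    proof -
      have "uL = (\<lambda>k. real (nat \<lfloor>(1 - \<epsilon>) * X k\<rfloor>) / X k + 1 / X k)"
        by (rule ext) (simp add: uL_def K_def add_divide_distrib)
      moreover have "(\<lambda>k. real (nat \<lfloor>(1 - \<epsilon>) * X k\<rfloor>) / X k + 1 / X k) \<longlonglongrightarrow> (1 - \<epsilon>) + 0"
        by (intro tendsto_add floor_ratio[OF Xinf] invX) (use \<epsilon> in simp)
      ultimately show ?thesis by simp
    qed
    define Vq where "Vq k = 1 - Phi (uL k) (y k) - ln 2 * (1 / L k)" for k
    have Vqlim: "Vq \<longlonglongrightarrow> 1 - (1 - \<epsilon>) - ln 2 * 0"
      unfolding Vq_def using \<epsilon>
      by (intro tendsto_intros invL Phi_lim[OF uLlim _ yinf]) auto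
    then have evV: "eventually (\<lambda>k. Vq k > 0) sequentially"
      using \<epsilon> by (intro order_tendstoD(1)[OF Vqlim]) simp
    have evL: "eventually (\<lambda>k. (1 - \<epsilon>) * X k \<le> d k) sequentially"
      using evV evy evU evXB
    proof eventually_elim
      case (elim k)
      have Kp: "K k \<ge> 1" by (simp add: K_def)
      have Kpos: "real (K k) > 0" using Kp by simp
      have "real (K k) * ln (real (K k)) - real (K k) * ln (B k / 4) = real (K k) * ln (4 * real (K k) / B k)"
        using Kpos Bpos[of k] by (simp add: ln_div ln_mult algebra_simps)
      also have "\<dots> = L k * Phi (uL k) (y k)"
        using Phi_identity[OF Kpos Bpos Lpos, of k] elim(2) by (simp add: uL_def X_def y_def)
      finally have e1: "real (K k) * ln (real (K k)) - real (K k) * ln (B k / 4) = L k * Phi (uL k) (y k)" .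
      have "L k * Vq k > 0" using elim(1) Lpos[of k] by simp
      moreover have "L k * Vq k = L k - L k * Phi (uL k) (y k) - ln 2"
        using Lpos[of k] by (simp add: Vq_def algebra_simps)
      ultimately have H: "- L k \<le> B k/2 + real (K k) * ln (B k/4) - real (K k) * ln (real (K k)) - ln 2"
        using e1 Bpos[of k] by linarith
      have "approx_degree (B k) (exp (- L k)) exp \<ge> K k"
        by (rule lower_log0[OF Bpos Kp elim(3) H])
      moreover have "(1 - \<epsilon>) * X k \<le> real (K k)" unfolding K_def by linarith
      ultimately show ?case unfolding d_def by linarith
    qed
    show "eventually (\<lambda>k. (1 - \<epsilon>) * X k \<le> d k \<and> d k \<le> (1 + \<epsilon>) * X k + 2) sequentially"
      using evL evU2 by eventually_elim simp
  qed simp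
  then show ?thesis by (simp add: d_def X_def y_def)
qed


theorem theorem1p2:
  fixes B \<delta> :: "nat \<Rightarrow> real"
  assumes B_ge: "\<And>k. B k \<ge> 1"
    and \<delta>_pos: "\<And>k. 0 < \<delta> k" and \<delta>_lt: "\<And>k. \<delta> k < 1"
    and lim: "filterlim (\<lambda>k. B k + 1 / \<delta> k) at_top sequentially"
  defines "L \<equiv> (\<lambda>k. ln (1 / \<delta> k))"
    and "d \<equiv> (\<lambda>k. real (approx_degree (B k) (\<delta> k) exp))"
  shows
    "((\<lambda>k. B k / L k) \<longlonglongrightarrow> 0 \<longrightarrow>
        (\<lambda>k. d k / (L k / ln (L k / B k))) \<longlonglongrightarrow> 1)
     \<and> (\<forall>r \<mu>. r > 0 \<and> (\<forall>k. B k = 2 * r * L k) \<and> \<mu> > 0 \<and> G \<mu> = -1 - 1 / r \<longrightarrow>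
        (\<lambda>k. d k / L k) \<longlonglongrightarrow> \<mu> * r)
     \<and> (\<forall>z. filterlim (\<lambda>k. B k / L k) at_top sequentially \<and> z > 0 \<and> G z = -1 \<longrightarrow>
        (\<lambda>k. d k / (z * B k / 2)) \<longlonglongrightarrow> 1)"
proof -
  have Lpos: "L k > 0" for k using \<delta>_pos[of k] \<delta>_lt[of k] by (simp add: L_def)
  have \<delta>eq: "\<delta> k = exp (- L k)" for k using \<delta>_pos[of k] by (simp add: L_def ln_div)
  have expL: "exp (L k) = 1 / \<delta> k" for k using \<delta>_pos[of k] by (simp add: L_def)
  have dEq: "d k = real (approx_degree (B k) (exp (- L k)) exp)" for k
    by (simp add: d_def \<delta>eq[symmetric])
  have Bpos: "B k > 0" for k using B_ge[of k] by simp
  have lim': "filterlim (\<lambda>k. B k + exp (L k)) at_top sequentially" using lim by (simp add: expL)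
  have P1: "(\<lambda>k. d k / (L k / ln (L k / B k))) \<longlonglongrightarrow> 1" if h: "(\<lambda>k. B k / L k) \<longlonglongrightarrow> 0"
  proof -
    have "filterlim (\<lambda>k. inverse (B k / L k)) at_top sequentially"
      by (rule filterlim_inverse_at_top[OF h]) (use Bpos Lpos in simp)
    then have "filterlim (\<lambda>k. L k / B k) at_top sequentially" by simp
    from main1[OF B_ge Lpos this] show ?thesis by (simp add: dEq)
  qed
  have P2: "(\<lambda>k. d k / L k) \<longlonglongrightarrow> \<mu> * r"
    if r: "r > 0" and BL: "\<forall>k. B k = 2 * r * L k" and \<mu>: "\<mu> > 0" and G\<mu>: "G \<mu> = -1 - 1 / r" for r \<mu>
  proof -
    have Linf: "filterlim L at_top sequentially"
    proof (subst filterlim_at_top, intro allI)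
      fix Z
      show "eventually (\<lambda>k. Z \<le> L k) sequentially"
        using lim'[unfolded filterlim_at_top, rule_format, of "2 * r * Z + exp Z"]
      proof eventually_elim
        case (elim k)
        show ?case
        proof (rule ccontr)
          assume "\<not> Z \<le> L k"
          then have "L k < Z" by simp
          then have a1: "2 * r * L k < 2 * r * Z" using r by simp
          have a2: "exp (L k) < exp Z" using \<open>L k < Z\<close> by simp
          have a3: "B k = 2 * r * L k" using BL by simp
          show False using elim a1 a2 a3 by linarith
        qed
      qed
    qed
    have Binf: "filterlim B at_top sequentially"
    proof (subst filterlim_at_top, intro allI)
      fix Z
      show "eventually (\<lambda>k. Z \<le> B k) sequentially"
        using Linf[unfolded filterlim_at_top, rule_format, of "Z / (2 * r)"]
      proof eventually_elim
        case (elim k)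
        then have "2 * r * (Z / (2 * r)) \<le> 2 * r * L k" using r by (intro mult_left_mono) auto
        then show ?case using BL r by simp
      qed
    qed
    have Llim: "(\<lambda>k. L k / (B k / 2)) \<longlonglongrightarrow> 1 / r"
    proof -
      have "L k / (B k / 2) = 1 / r" for k using BL Lpos[of k] r by (simp add: field_simps)
      then show ?thesis by simp
    qed
    have eq: "1 + G \<mu> + 1 / r = 0" using G\<mu> by simp
    have m: "(\<lambda>k. real (approx_degree (B k) (exp (- L k)) exp) / (B k / 2)) \<longlonglongrightarrow> \<mu>"
      by (rule main23[OF B_ge Binf Llim \<mu> eq])
    have "(\<lambda>k. r * (real (approx_degree (B k) (exp (- L k)) exp) / (B k / 2))) \<longlonglongrightarrow> r * \<mu>"
      by (rule tendsto_mult_left[OF m])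
    moreover have "r * (real (approx_degree (B k) (exp (- L k)) exp) / (B k / 2)) = d k / L k" for k
      using BL Lpos[of k] r by (simp add: dEq field_simps)
    ultimately show ?thesis by (simp add: mult.commute)
  qed
  have P3: "(\<lambda>k. d k / (z * B k / 2)) \<longlonglongrightarrow> 1"
    if h: "filterlim (\<lambda>k. B k / L k) at_top sequentially" and z: "z > 0" and Gz: "G z = -1" for z
  proof -
    have evBL: "eventually (\<lambda>k. L k \<le> B k) sequentially"
      using h[unfolded filterlim_at_top, rule_format, of 1]
    proof eventually_elim
      case (elim k)
      then show ?case using Lpos[of k] by (simp add: field_simps)
    qed
    have Binf: "filterlim B at_top sequentially"
    proof (subst filterlim_at_top, intro allI)
      fix Z
      show "eventually (\<lambda>k. Z \<le> B k) sequentially"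
        using lim'[unfolded filterlim_at_top, rule_format, of "Z + exp Z"] evBL
      proof eventually_elim
        case (elim k)
        show ?case
        proof (rule ccontr)
          assume "\<not> Z \<le> B k"
          then have "B k < Z" by simp
          moreover have "exp (L k) \<le> exp (B k)" using elim(2) by simp
          moreover have "exp (B k) < exp Z" using \<open>B k < Z\<close> by simp
          ultimately show False using elim(1) by linarith
        qed
      qed
    qed
    have Llim: "(\<lambda>k. L k / (B k / 2)) \<longlonglongrightarrow> 0"
    proof -
      have "(\<lambda>k. 2 * inverse (B k / L k)) \<longlonglongrightarrow> 2 * 0"
        by (intro tendsto_mult tendsto_const tendsto_inverse_0_at_top h)
      moreover have "2 * inverse (B k / L k) = L k / (B k / 2)" for k by simp
      ultimately show ?thesis by (simp only:) simp
    qed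
    have eq: "1 + G z + 0 = 0" using Gz by simp
    have m: "(\<lambda>k. real (approx_degree (B k) (exp (- L k)) exp) / (B k / 2)) \<longlonglongrightarrow> z"
      by (rule main23[OF B_ge Binf Llim z eq])
    have "(\<lambda>k. (real (approx_degree (B k) (exp (- L k)) exp) / (B k / 2)) / z) \<longlonglongrightarrow> z / z"
      by (intro tendsto_divide m tendsto_const) (use z in simp)
    moreover have "(real (approx_degree (B k) (exp (- L k)) exp) / (B k / 2)) / z = d k / (z * B k / 2)" for k
      by (simp add: dEq field_simps)
    ultimately show ?thesis using z by simp
  qed
  show ?thesis using P1 P2 P3 by blast
qed


end
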